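(* Let $M_G$ be a connected mixed graph. Then $\operatorname{rank}N(M_G)=3$ if and only if $T_{M_G}$ is either a mixed triangle, or a mixed graph whose underlying graph is $K_4$ and among whose three mixed $4$-cycles two are positive and one is semi-negative.
   Context: A mixed graph $M_G$ is obtained from a finite simple graph $G$ by orienting the edges of some subset of $E(G)$; it is connected if $G$ is. With $\omega=\frac{1+\mathbf{i}\sqrt3}{2}$, $N(M_G)=(n_{st})$ has entry $\omega$ for an arc from $u_s$ to $u_t$, $\bar\omega$ for an arc from $u_t$ to $u_s$, $1$ for an undirected edge, $0$ otherwise. A mixed cycle is a mixed subgraph whose underlying graph is a cycle $v_1\cdots v_lv_1$, with weight $n_{12}\cdots n_{l1}$; positive means weight $1$, semi-negative means weight $-\omega$ or $-\bar\omega$. A mixed triangle is a mixed graph whose underlying graph is $K_3$. Switching: $\mathbb{T}_6=\{1,-1,\omega,\bar\omega,-\omega,-\bar\omega\}$; given a partition $V=\bigcup_{j\in\mathbb{T}_6}V_j$ into possibly empty sets, an edge or arc $xy$ has type $(j,k)$ if $x\in V_j,y\in V_k$ (arcs directed from $x$ to $y$); the partition is admissible if every undirected edge has type $(j,j)$ or $(j,\omega j)$ and every arc has type $(j,j)$, $(j,\bar\omega j)$ or $(j,-\omega j)$ for some $j$; a three-way switching replaces each undirected edge of type $(j,\omega j)$ by an arc from $V_j$ to $V_{\omega j}$, each arc of type $(j,\bar\omega j)$ by an undirected edge, and reverses each arc of type $(j,-\omega j)$; two mixed graphs on the same vertex set are switching equivalent if one is obtained from the other by three-way switchings and reversing all arcs.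 Two vertices $u,v$ of $M_G$ are twins if $M_G$ is switching equivalent to a mixed graph $M'_G$ with $N(M'_G)_{uj}=N(M'_G)_{vj}$ for all vertices $j$. $T_{M_G}$ is the induced mixed subgraph obtained from $M_G$ by deleting all but one vertex from every set of twins. *)

theory Defs
  imports Complex_Main "Jordan_Normal_Form.DL_Rank"
begin

text \<open>A mixed graph on the vertex set {0..<n}: E is the (symmetric, irreflexive)
  edge relation of the underlying simple graph G; D x y means that the edge xy
  is oriented as an arc from x to y.\<close>

definition mixed_graph :: "nat \<Rightarrow> (nat \<Rightarrow> nat \<Rightarrow> bool) \<Rightarrow> (nat \<Rightarrow> nat \<Rightarrow> bool) \<Rightarrow> bool" where
  "mixed_graph n E D \<longleftrightarrow>
     (\<forall>x y. E x y \<longrightarrow> x < n \<and> y < n \<and> x \<noteq> y \<and> E y x) \<and>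
     (\<forall>x y. D x y \<longrightarrow> E x y \<and> \<not> D y x)"

definition undir :: "(nat \<Rightarrow> nat \<Rightarrow> bool) \<Rightarrow> (nat \<Rightarrow> nat \<Rightarrow> bool) \<Rightarrow> nat \<Rightarrow> nat \<Rightarrow> bool" where
  "undir E D x y \<longleftrightarrow> E x y \<and> \<not> D x y \<and> \<not> D y x"

definition connected_graph :: "nat \<Rightarrow> (nat \<Rightarrow> nat \<Rightarrow> bool) \<Rightarrow> bool" where
  "connected_graph n E \<longleftrightarrow> (\<forall>u<n. \<forall>v<n. E\<^sup>*\<^sup>* u v)"

definition omega :: complex where
  "omega = (1 + \<i> * complex_of_real (sqrt 3)) / 2"

definition Nent :: "(nat \<Rightarrow> nat \<Rightarrow> bool) \<Rightarrow> (nat \<Rightarrow> nat \<Rightarrow> bool) \<Rightarrow> nat \<Rightarrow> nat \<Rightarrow> complex" where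
  "Nent E D s t = (if D s t then omega else if D t s then cnj omega
                   else if E s t then 1 else 0)"

definition Nmat :: "nat \<Rightarrow> (nat \<Rightarrow> nat \<Rightarrow> bool) \<Rightarrow> (nat \<Rightarrow> nat \<Rightarrow> bool) \<Rightarrow> complex mat" where
  "Nmat n E D = mat n n (\<lambda>(s, t). Nent E D s t)"

definition T6 :: "complex set" where
  "T6 = {1, -1, omega, cnj omega, - omega, - cnj omega}"

text \<open>A partition V = \<Union>_{j\<in>T6} V_j is encoded by p : V \<rightarrow> T6 (x \<in> V_{p x}).\<close>
definition admissible :: "nat \<Rightarrow> (nat \<Rightarrow> nat \<Rightarrow> bool) \<Rightarrow> (nat \<Rightarrow> nat \<Rightarrow> bool) \<Rightarrow> (nat \<Rightarrow> complex) \<Rightarrow> bool" where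
  "admissible n E D p \<longleftrightarrow>
     (\<forall>x<n. p x \<in> T6) \<and>
     (\<forall>x y. undir E D x y \<longrightarrow> p y = p x \<or> p y = omega * p x \<or> p x = omega * p y) \<and>
     (\<forall>x y. D x y \<longrightarrow> p y = p x \<or> p y = cnj omega * p x \<or> p y = - omega * p x)"

text \<open>Three-way switching: undirected edges of type (j, \<omega> j) become arcs from V_j
  to V_{\<omega> j}; arcs of type (j, \<omega>bar j) become undirected; arcs of type (j, -\<omega> j)
  are reversed; everything else is unchanged.\<close>
definition switch :: "(nat \<Rightarrow> nat \<Rightarrow> bool) \<Rightarrow> (nat \<Rightarrow> nat \<Rightarrow> bool) \<Rightarrow> (nat \<Rightarrow> complex) \<Rightarrow> nat \<Rightarrow> nat \<Rightarrow> bool" where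
  "switch E D p x y \<longleftrightarrow>
     (undir E D x y \<and> p y = omega * p x) \<or>
     (D x y \<and> p y = p x) \<or>
     (D y x \<and> p x = - omega * p y)"

definition switch_step :: "nat \<Rightarrow> (nat \<Rightarrow> nat \<Rightarrow> bool) \<Rightarrow> (nat \<Rightarrow> nat \<Rightarrow> bool) \<Rightarrow> (nat \<Rightarrow> nat \<Rightarrow> bool) \<Rightarrow> bool" where
  "switch_step n E D D' \<longleftrightarrow>
     (\<exists>p. admissible n E D p \<and> D' = switch E D p) \<or> D' = (\<lambda>x y. D y x)"

definition switching_equiv :: "nat \<Rightarrow> (nat \<Rightarrow> nat \<Rightarrow> bool) \<Rightarrow> (nat \<Rightarrow> nat \<Rightarrow> bool) \<Rightarrow> (nat \<Rightarrow> nat \<Rightarrow> bool) \<Rightarrow> bool" where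
  "switching_equiv n E D D' \<longleftrightarrow> (switch_step n E)\<^sup>*\<^sup>* D D'"

definition twins :: "nat \<Rightarrow> (nat \<Rightarrow> nat \<Rightarrow> bool) \<Rightarrow> (nat \<Rightarrow> nat \<Rightarrow> bool) \<Rightarrow> nat \<Rightarrow> nat \<Rightarrow> bool" where
  "twins n E D u v \<longleftrightarrow> u < n \<and> v < n \<and>
     (\<exists>D'. switching_equiv n E D D' \<and> (\<forall>j<n. Nent E D' u j = Nent E D' v j))"

text \<open>S is a set of representatives obtained by keeping exactly one vertex from
  every set of twins; T_{M_G} is the induced mixed subgraph on S.\<close>
definition twin_reduction :: "nat \<Rightarrow> (nat \<Rightarrow> nat \<Rightarrow> bool) \<Rightarrow> (nat \<Rightarrow> nat \<Rightarrow> bool) \<Rightarrow> nat set \<Rightarrow> bool" where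
  "twin_reduction n E D S \<longleftrightarrow> S \<subseteq> {0..<n} \<and>
     (\<forall>v<n. \<exists>s\<in>S. twins n E D v s) \<and>
     (\<forall>s\<in>S. \<forall>t\<in>S. s \<noteq> t \<longrightarrow> \<not> twins n E D s t)"

definition is_mixed_triangle :: "(nat \<Rightarrow> nat \<Rightarrow> bool) \<Rightarrow> nat set \<Rightarrow> bool" where
  "is_mixed_triangle E S \<longleftrightarrow> card S = 3 \<and> (\<forall>x\<in>S. \<forall>y\<in>S. x \<noteq> y \<longrightarrow> E x y)"

definition cycle4_weight :: "(nat \<Rightarrow> nat \<Rightarrow> bool) \<Rightarrow> (nat \<Rightarrow> nat \<Rightarrow> bool) \<Rightarrow> nat \<Rightarrow> nat \<Rightarrow> nat \<Rightarrow> nat \<Rightarrow> complex" where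
  "cycle4_weight E D a b c d = Nent E D a b * Nent E D b c * Nent E D c d * Nent E D d a"

definition positive_w :: "complex \<Rightarrow> bool" where
  "positive_w w \<longleftrightarrow> w = 1"

definition semi_negative_w :: "complex \<Rightarrow> bool" where
  "semi_negative_w w \<longleftrightarrow> w = - omega \<or> w = - cnj omega"

definition is_K4_two_pos_one_semineg :: "(nat \<Rightarrow> nat \<Rightarrow> bool) \<Rightarrow> (nat \<Rightarrow> nat \<Rightarrow> bool) \<Rightarrow> nat set \<Rightarrow> bool" where
  "is_K4_two_pos_one_semineg E D S \<longleftrightarrow>
     card S = 4 \<and> (\<forall>x\<in>S. \<forall>y\<in>S. x \<noteq> y \<longrightarrow> E x y) \<and>
     (\<exists>a b c d. S = {a, b, c, d} \<and>
        positive_w (cycle4_weight E D a b c d) \<and>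
        positive_w (cycle4_weight E D a b d c) \<and>
        semi_negative_w (cycle4_weight E D a c b d))"

end

theory Submission
  imports Defs
begin

lemma sqrt3_sq: "complex_of_real (sqrt 3) * complex_of_real (sqrt 3) = 3"
  by (simp flip: of_real_mult)

lemma omega_sq: "omega * omega = omega - 1"
proof -
  have "(1 + \<i> * complex_of_real (sqrt 3)) * (1 + \<i> * complex_of_real (sqrt 3))
        = 1 + 2 * \<i> * complex_of_real (sqrt 3) + \<i> * \<i> * (complex_of_real (sqrt 3) * complex_of_real (sqrt 3))"
    by (simp add: algebra_simps)
  also have "\<dots> = 2 * \<i> * complex_of_real (sqrt 3) - 2" by (simp add: sqrt3_sq)
  finally show ?thesis unfolding omega_def by (simp add: field_simps)
qed

lemma cnj_omega: "cnj omega = 1 - omega"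
  unfolding omega_def by (simp add: complex_eq_iff)

lemma Im_omega: "Im omega = sqrt 3 / 2" unfolding omega_def by simp
lemma Re_omega: "Re omega = 1 / 2" unfolding omega_def by simp

type_synonym eis = "int \<times> int"

definition eis :: "eis \<Rightarrow> complex" where
  "eis p = of_int (fst p) + of_int (snd p) * omega"

fun emul :: "eis \<Rightarrow> eis \<Rightarrow> eis" where
  "emul (a, b) (c, d) = (a * c - b * d, a * d + b * c + b * d)"
fun eadd :: "eis \<Rightarrow> eis \<Rightarrow> eis" where
  "eadd (a, b) (c, d) = (a + c, b + d)"
fun eneg :: "eis \<Rightarrow> eis" where
  "eneg (a, b) = (- a, - b)"
fun ecnj :: "eis \<Rightarrow> eis" where
  "ecnj (a, b) = (a + b, - b)"

lemma quad_mult: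
  fixes x A B C D :: "'a::comm_ring_1"
  assumes "x * x = x - 1"
  shows "(A + B * x) * (C + D * x) = A * C - B * D + (A * D + B * C + B * D) * x"
proof -
  have "(A + B * x) * (C + D * x) = A * C + (A * D + B * C) * x + B * D * (x * x)"
    by (simp add: algebra_simps)
  also have "\<dots> = A * C + (A * D + B * C) * x + B * D * (x - 1)" by (simp only: assms)
  finally show ?thesis by (simp add: algebra_simps)
qed

lemma eis_mult: "eis p * eis q = eis (emul p q)"
proof -
  obtain a b c d where p: "p = (a, b)" and q: "q = (c, d)" by (cases p, cases q)
  have "eis (emul p q) = of_int a * of_int c - of_int b * of_int d
          + (of_int a * of_int d + of_int b * of_int c + of_int b * of_int d) * omega"
    by (simp add: eis_def p q)
  moreover have "eis p * eis q = (of_int a + of_int b * omega) * (of_int c + of_int d * omega)"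
    by (simp add: eis_def p q)
  ultimately show ?thesis using quad_mult[OF omega_sq] by simp
qed

lemma eis_add: "eis p + eis q = eis (eadd p q)"
  by (cases p, cases q) (simp add: eis_def algebra_simps)
lemma eis_neg: "- eis p = eis (eneg p)"
  by (cases p) (simp add: eis_def algebra_simps)
lemma eis_diff: "eis p - eis q = eis (eadd p (eneg q))"
  by (metis diff_conv_add_uminus eis_add eis_neg)
lemma eis_cnj: "cnj (eis p) = eis (ecnj p)"
  by (cases p) (simp add: eis_def cnj_omega algebra_simps)

lemma eis_inj: "eis p = eis q \<longleftrightarrow> p = q"
proof
  assume h: "eis p = eis q"
  obtain a b c d where p: "p = (a, b)" and q: "q = (c, d)" by (cases p, cases q)
  have "Im (eis p) = Im (eis q)" using h by simp
  hence "of_int b * (sqrt 3 / 2) = (of_int d * (sqrt 3 / 2) :: real)" unfolding eis_def p q by (simp add: Im_omega)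
  hence bd: "b = d" by simp
  have "Re (eis p) = Re (eis q)" using h by simp
  hence "a = c" unfolding eis_def p q using bd by (simp add: Re_omega)
  thus "p = q" using bd p q by simp
next
  assume "p = q" thus "eis p = eis q" by (rule arg_cong)
qed

lemma eis_0: "0 = eis (0, 0)" by (simp add: eis_def)
lemma eis_1: "1 = eis (1, 0)" by (simp add: eis_def)
lemma eis_omega: "omega = eis (0, 1)" by (simp add: eis_def)
lemma eis_cnj_omega: "cnj omega = eis (1, -1)" by (simp add: eis_def cnj_omega)

definition alph :: "eis list" where "alph = [(0,0),(1,0),(0,1),(1,-1)]"
definition nzl :: "eis list" where "nzl = [(1,0),(0,1),(1,-1)]"
definition t6l :: "eis list" where "t6l = [(1,0),(-1,0),(0,1),(1,-1),(0,-1),(-1,1)]"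

definition detP :: "eis \<Rightarrow> eis \<Rightarrow> eis \<Rightarrow> eis" where
  "detP x y z = eadd (emul (emul x z) (ecnj y)) (emul (emul y (ecnj x)) (ecnj z))"
definition ad1P where
  "ad1P x y z c1 c2 c3 = eadd (eadd (eneg (emul (emul z (ecnj z)) c1)) (emul (emul y (ecnj z)) c2)) (emul (emul x z) c3)"
definition ad2P where
  "ad2P x y z c1 c2 c3 = eadd (eadd (emul (emul z (ecnj y)) c1) (eneg (emul (emul y (ecnj y)) c2))) (emul (emul y (ecnj x)) c3)"
definition ad3P where
  "ad3P x y z c1 c2 c3 = eadd (eadd (emul (emul (ecnj x) (ecnj z)) c1) (emul (emul x (ecnj y)) c2)) (eneg (emul (emul x (ecnj x)) c3))"
definition QP where
  "QP x y z u1 u2 u3 c1 c2 c3 = eadd (eadd (emul (ecnj u1) (ad1P x y z c1 c2 c3)) (emul (ecnj u2) (ad2P x y z c1 c2 c3)))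
      (emul (ecnj u3) (ad3P x y z c1 c2 c3))"
definition propP where
  "propP c1 c2 c3 d1 d2 d3 = (\<exists>m\<in>set t6l. c1 = emul m d1 \<and> c2 = emul m d2 \<and> c3 = emul m d3)"
definition w4P where "w4P a b c d = emul (emul (emul a b) c) d"
definition semiP where "semiP w = (w = (0,-1) \<or> w = (-1,1))"
definition opt1P where "opt1P x y z c1 c2 c3 =
  (w4P x z c3 (ecnj c1) = (1,0) \<and> w4P x c2 (ecnj c3) (ecnj y) = (1,0) \<and> semiP (w4P y (ecnj z) c2 (ecnj c1)))"
definition opt2P where "opt2P x y z c1 c2 c3 =
  (w4P y (ecnj z) c2 (ecnj c1) = (1,0) \<and> w4P y c3 (ecnj c2) (ecnj x) = (1,0) \<and> semiP (w4P x z c3 (ecnj c1)))"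
definition opt3P where "opt3P x y z c1 c2 c3 =
  (w4P c1 (ecnj c2) z (ecnj y) = (1,0) \<and> w4P c1 (ecnj c3) (ecnj z) (ecnj x) = (1,0) \<and> semiP (w4P x c2 (ecnj c3) (ecnj y)))"

definition survP where "survP x y z c1 c2 c3 =
  ((c1, c2, c3) \<noteq> ((0,0),(0,0),(0,0)) \<and> QP x y z c1 c2 c3 c1 c2 c3 = (0,0) \<and>
   \<not> propP c1 c2 c3 (0,0) (ecnj x) (ecnj y) \<and> \<not> propP c1 c2 c3 x (0,0) (ecnj z) \<and>
   \<not> propP c1 c2 c3 y z (0,0))"

definition fc3P :: bool where "fc3P =
  (\<forall>x\<in>set nzl. \<forall>y\<in>set nzl. \<forall>z\<in>set nzl. \<forall>c1\<in>set alph. \<forall>c2\<in>set alph. \<forall>c3\<in>set alph.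
     survP x y z c1 c2 c3 \<longrightarrow> (c1 \<noteq> (0,0) \<and> c2 \<noteq> (0,0) \<and> c3 \<noteq> (0,0) \<and>
        (opt1P x y z c1 c2 c3 \<or> opt2P x y z c1 c2 c3 \<or> opt3P x y z c1 c2 c3)))"

lemma fc3P: fc3P
  unfolding fc3P_def by code_simp

definition vecs :: "(eis \<times> eis \<times> eis) list" where
  "vecs = concat (map (\<lambda>c1. concat (map (\<lambda>c2. map (\<lambda>c3. (c1, c2, c3)) alph) alph)) alph)"
definition survs where "survs x y z = filter (\<lambda>(c1, c2, c3). survP x y z c1 c2 c3) vecs"

definition fc4P :: bool where "fc4P =
  (\<forall>x\<in>set nzl. \<forall>y\<in>set nzl. \<forall>z\<in>set nzl. \<forall>(c1, c2, c3)\<in>set (survs x y z). \<forall>(d1, d2, d3)\<in>set (survs x y z).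
     (\<exists>e\<in>set alph. QP x y z c1 c2 c3 d1 d2 d3 = emul (detP x y z) e) \<longrightarrow> propP c1 c2 c3 d1 d2 d3)"

lemma fc4P: fc4P
  unfolding fc4P_def by code_simp

definition fc1P :: bool where "fc1P = (\<forall>x\<in>set nzl. \<forall>y\<in>set nzl. \<forall>z\<in>set nzl. detP x y z \<noteq> (0,0))"
lemma fc1P: fc1P
  unfolding fc1P_def by code_simp

definition fc2P :: bool where "fc2P = (\<forall>x\<in>set nzl. \<forall>y\<in>set nzl. \<forall>z\<in>set nzl.
   \<forall>c1\<in>set nzl. \<forall>c2\<in>set nzl. \<forall>c3\<in>set nzl. opt1P x y z c1 c2 c3 \<longrightarrow> QP x y z c1 c2 c3 c1 c2 c3 = (0,0))"
lemma fc2P: fc2P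
  unfolding fc2P_def by code_simp

definition A4 :: "complex set" where "A4 = eis ` set alph"
definition NZ :: "complex set" where "NZ = eis ` set nzl"

lemma T6_eis: "T6 = eis ` set t6l"
  by (simp add: T6_def t6l_def eis_def cnj_omega algebra_simps)

lemma A4_alt: "A4 = {0, 1, omega, cnj omega}"
  by (simp add: A4_def alph_def eis_def cnj_omega algebra_simps)
lemma NZ_alt: "NZ = {1, omega, cnj omega}"
  by (simp add: NZ_def nzl_def eis_def cnj_omega algebra_simps)

definition detC :: "complex \<Rightarrow> complex \<Rightarrow> complex \<Rightarrow> complex" where
  "detC x y z = x * z * cnj y + y * cnj x * cnj z"
definition ad1C :: "complex \<Rightarrow> complex \<Rightarrow> complex \<Rightarrow> complex \<Rightarrow> complex \<Rightarrow> complex \<Rightarrow> complex" where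
  "ad1C x y z c1 c2 c3 = - (z * cnj z * c1) + y * cnj z * c2 + x * z * c3"
definition ad2C :: "complex \<Rightarrow> complex \<Rightarrow> complex \<Rightarrow> complex \<Rightarrow> complex \<Rightarrow> complex \<Rightarrow> complex" where
  "ad2C x y z c1 c2 c3 = z * cnj y * c1 + - (y * cnj y * c2) + y * cnj x * c3"
definition ad3C :: "complex \<Rightarrow> complex \<Rightarrow> complex \<Rightarrow> complex \<Rightarrow> complex \<Rightarrow> complex \<Rightarrow> complex" where
  "ad3C x y z c1 c2 c3 = cnj x * cnj z * c1 + x * cnj y * c2 + - (x * cnj x * c3)"
definition QC where
  "QC x y z u1 u2 u3 c1 c2 c3 = cnj u1 * ad1C x y z c1 c2 c3 + cnj u2 * ad2C x y z c1 c2 c3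
      + cnj u3 * ad3C x y z c1 c2 c3"
definition propC :: "complex \<Rightarrow> complex \<Rightarrow> complex \<Rightarrow> complex \<Rightarrow> complex \<Rightarrow> complex \<Rightarrow> bool" where
  "propC c1 c2 c3 d1 d2 d3 = (\<exists>m\<in>T6. c1 = m * d1 \<and> c2 = m * d2 \<and> c3 = m * d3)"
definition w4C :: "complex \<Rightarrow> complex \<Rightarrow> complex \<Rightarrow> complex \<Rightarrow> complex" where
  "w4C a b c d = a * b * c * d"
definition semiC where "semiC w = (w = - omega \<or> w = - cnj omega)"
definition opt1C where "opt1C x y z c1 c2 c3 =
  (w4C x z c3 (cnj c1) = 1 \<and> w4C x c2 (cnj c3) (cnj y) = 1 \<and> semiC (w4C y (cnj z) c2 (cnj c1)))"
definition opt2C where "opt2C x y z c1 c2 c3 =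
  (w4C y (cnj z) c2 (cnj c1) = 1 \<and> w4C y c3 (cnj c2) (cnj x) = 1 \<and> semiC (w4C x z c3 (cnj c1)))"
definition opt3C where "opt3C x y z c1 c2 c3 =
  (w4C c1 (cnj c2) z (cnj y) = 1 \<and> w4C c1 (cnj c3) (cnj z) (cnj x) = 1 \<and> semiC (w4C x c2 (cnj c3) (cnj y)))"

lemmas eis_simps = eis_mult eis_add eis_neg eis_cnj eis_inj

lemma detC_eis: "detC (eis x) (eis y) (eis z) = eis (detP x y z)"
  by (simp add: detC_def detP_def eis_simps)
lemma ad1C_eis: "ad1C (eis x) (eis y) (eis z) (eis c1) (eis c2) (eis c3) = eis (ad1P x y z c1 c2 c3)"
  by (simp add: ad1C_def ad1P_def eis_simps)
lemma ad2C_eis: "ad2C (eis x) (eis y) (eis z) (eis c1) (eis c2) (eis c3) = eis (ad2P x y z c1 c2 c3)"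
  by (simp add: ad2C_def ad2P_def eis_simps)
lemma ad3C_eis: "ad3C (eis x) (eis y) (eis z) (eis c1) (eis c2) (eis c3) = eis (ad3P x y z c1 c2 c3)"
  by (simp add: ad3C_def ad3P_def eis_simps)
lemma QC_eis: "QC (eis x) (eis y) (eis z) (eis u1) (eis u2) (eis u3) (eis c1) (eis c2) (eis c3)
   = eis (QP x y z u1 u2 u3 c1 c2 c3)"
  by (simp add: QC_def QP_def ad1C_eis ad2C_eis ad3C_eis eis_simps)
lemma propC_eis: "propC (eis c1) (eis c2) (eis c3) (eis d1) (eis d2) (eis d3) = propP c1 c2 c3 d1 d2 d3"
  by (simp add: propC_def propP_def T6_eis eis_simps)
lemma w4C_eis: "w4C (eis a) (eis b) (eis c) (eis d) = eis (w4P a b c d)"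
  by (simp add: w4C_def w4P_def eis_simps)
lemma semiC_eis: "semiC (eis w) = semiP w"
  by (simp add: semiC_def semiP_def eis_omega eis_cnj_omega eis_simps)
lemma opt1C_eis: "opt1C (eis x) (eis y) (eis z) (eis c1) (eis c2) (eis c3) = opt1P x y z c1 c2 c3"
  by (simp add: opt1C_def opt1P_def eis_cnj w4C_eis semiC_eis eis_1 eis_inj)
lemma opt2C_eis: "opt2C (eis x) (eis y) (eis z) (eis c1) (eis c2) (eis c3) = opt2P x y z c1 c2 c3"
  by (simp add: opt2C_def opt2P_def eis_cnj w4C_eis semiC_eis eis_1 eis_inj)
lemma opt3C_eis: "opt3C (eis x) (eis y) (eis z) (eis c1) (eis c2) (eis c3) = opt3P x y z c1 c2 c3"
  by (simp add: opt3C_def opt3P_def eis_cnj w4C_eis semiC_eis eis_1 eis_inj)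

lemmas C_eis = detC_eis ad1C_eis ad2C_eis ad3C_eis QC_eis propC_eis w4C_eis semiC_eis
  opt1C_eis opt2C_eis opt3C_eis

lemma eis_zero_iff: "eis p = 0 \<longleftrightarrow> p = (0,0)"
  by (simp add: eis_0 eis_inj)

lemma fc1C:
  assumes "x \<in> NZ" "y \<in> NZ" "z \<in> NZ"
  shows "detC x y z \<noteq> 0"
  using assms fc1P unfolding fc1P_def NZ_def
  by (auto simp: C_eis eis_zero_iff)

lemma fc2C:
  assumes "x \<in> NZ" "y \<in> NZ" "z \<in> NZ" "c1 \<in> NZ" "c2 \<in> NZ" "c3 \<in> NZ"
    and "opt1C x y z c1 c2 c3"
  shows "QC x y z c1 c2 c3 c1 c2 c3 = 0"
  using assms fc2P unfolding fc2P_def NZ_def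
  by (auto simp: C_eis eis_zero_iff)

lemma fc3C:
  assumes "x \<in> NZ" "y \<in> NZ" "z \<in> NZ" "c1 \<in> A4" "c2 \<in> A4" "c3 \<in> A4"
    and "\<not> (c1 = 0 \<and> c2 = 0 \<and> c3 = 0)"
    and "QC x y z c1 c2 c3 c1 c2 c3 = 0"
    and "\<not> propC c1 c2 c3 0 (cnj x) (cnj y)" "\<not> propC c1 c2 c3 x 0 (cnj z)" "\<not> propC c1 c2 c3 y z 0"
  shows "c1 \<noteq> 0 \<and> c2 \<noteq> 0 \<and> c3 \<noteq> 0 \<and>
     (opt1C x y z c1 c2 c3 \<or> opt2C x y z c1 c2 c3 \<or> opt3C x y z c1 c2 c3)"
proof -
  obtain px py pz p1 p2 p3 where e: "x = eis px" "y = eis py" "z = eis pz" "c1 = eis p1" "c2 = eis p2" "c3 = eis p3"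
    and m: "px \<in> set nzl" "py \<in> set nzl" "pz \<in> set nzl" "p1 \<in> set alph" "p2 \<in> set alph" "p3 \<in> set alph"
    using assms(1-6) unfolding NZ_def A4_def by blast
  have "survP px py pz p1 p2 p3"
    using assms(7-11) unfolding survP_def e eis_0 by (auto simp: C_eis eis_inj eis_cnj)
  hence "p1 \<noteq> (0,0) \<and> p2 \<noteq> (0,0) \<and> p3 \<noteq> (0,0) \<and>
        (opt1P px py pz p1 p2 p3 \<or> opt2P px py pz p1 p2 p3 \<or> opt3P px py pz p1 p2 p3)"
    using fc3P m unfolding fc3P_def by blast
  thus ?thesis unfolding e by (simp add: C_eis eis_zero_iff)
qed

lemma survs_mem: "p1 \<in> set alph \<Longrightarrow> p2 \<in> set alph \<Longrightarrow> p3 \<in> set alph \<Longrightarrow> survP x y z p1 p2 p3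
   \<Longrightarrow> (p1, p2, p3) \<in> set (survs x y z)"
  unfolding survs_def vecs_def by auto

lemma fc4C:
  assumes "x \<in> NZ" "y \<in> NZ" "z \<in> NZ" "c1 \<in> A4" "c2 \<in> A4" "c3 \<in> A4" "d1 \<in> A4" "d2 \<in> A4" "d3 \<in> A4"
    and "\<not> (c1 = 0 \<and> c2 = 0 \<and> c3 = 0)"
    and "QC x y z c1 c2 c3 c1 c2 c3 = 0"
    and "\<not> propC c1 c2 c3 0 (cnj x) (cnj y)" "\<not> propC c1 c2 c3 x 0 (cnj z)" "\<not> propC c1 c2 c3 y z 0"
    and "\<not> (d1 = 0 \<and> d2 = 0 \<and> d3 = 0)"
    and "QC x y z d1 d2 d3 d1 d2 d3 = 0"
    and "\<not> propC d1 d2 d3 0 (cnj x) (cnj y)" "\<not> propC d1 d2 d3 x 0 (cnj z)" "\<not> propC d1 d2 d3 y z 0"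
    and "e \<in> A4" "QC x y z c1 c2 c3 d1 d2 d3 = detC x y z * e"
  shows "propC c1 c2 c3 d1 d2 d3"
proof -
  obtain px py pz p1 p2 p3 q1 q2 q3 pe where e: "x = eis px" "y = eis py" "z = eis pz" "c1 = eis p1" "c2 = eis p2" "c3 = eis p3"
     "d1 = eis q1" "d2 = eis q2" "d3 = eis q3" "e = eis pe"
    and m: "px \<in> set nzl" "py \<in> set nzl" "pz \<in> set nzl" "p1 \<in> set alph" "p2 \<in> set alph" "p3 \<in> set alph"
      "q1 \<in> set alph" "q2 \<in> set alph" "q3 \<in> set alph" "pe \<in> set alph"
    using assms(1-9) assms(20) unfolding NZ_def A4_def by blast
  have "survP px py pz p1 p2 p3"
    using assms(10-14) unfolding survP_def e eis_0 by (auto simp: C_eis eis_inj eis_cnj)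
  hence s1: "(p1, p2, p3) \<in> set (survs px py pz)" using m by (simp add: survs_mem)
  have "survP px py pz q1 q2 q3"
    using assms(15-19) unfolding survP_def e eis_0 by (auto simp: C_eis eis_inj eis_cnj)
  hence s2: "(q1, q2, q3) \<in> set (survs px py pz)" using m by (simp add: survs_mem)
  have "QP px py pz p1 p2 p3 q1 q2 q3 = emul (detP px py pz) pe"
    using assms(21) unfolding e by (simp add: C_eis eis_mult eis_inj)
  moreover have "\<forall>(c1, c2, c3)\<in>set (survs px py pz). \<forall>(d1, d2, d3)\<in>set (survs px py pz).
     (\<exists>e\<in>set alph. QP px py pz c1 c2 c3 d1 d2 d3 = emul (detP px py pz) e) \<longrightarrow> propP c1 c2 c3 d1 d2 d3"
    using fc4P m(1-3) unfolding fc4P_def by blast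
  hence "\<forall>(d1, d2, d3)\<in>set (survs px py pz).
     (\<exists>e\<in>set alph. QP px py pz p1 p2 p3 d1 d2 d3 = emul (detP px py pz) e) \<longrightarrow> propP p1 p2 p3 d1 d2 d3"
    using s1 by (drule_tac bspec) auto
  hence "(\<exists>e\<in>set alph. QP px py pz p1 p2 p3 q1 q2 q3 = emul (detP px py pz) e) \<longrightarrow> propP p1 p2 p3 q1 q2 q3"
    using s2 by (drule_tac bspec) auto
  ultimately have "propP p1 p2 p3 q1 q2 q3" using m(10) by blast
  thus ?thesis unfolding e by (simp add: C_eis)
qed

lemma omega_ne0: "omega \<noteq> 0" by (simp add: eis_omega eis_zero_iff)
lemma cnj_omega_ne0: "cnj omega \<noteq> 0" by (simp add: eis_cnj_omega eis_zero_iff)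

lemma Nent_A4: "Nent E D s t \<in> A4"
  by (simp add: Nent_def A4_alt)

lemma mg_E_sym: "mixed_graph n E D \<Longrightarrow> E x y \<Longrightarrow> E y x"
  unfolding mixed_graph_def by blast
lemma mg_E_irrefl: "mixed_graph n E D \<Longrightarrow> \<not> E x x"
  unfolding mixed_graph_def by blast
lemma mg_E_range: "mixed_graph n E D \<Longrightarrow> E x y \<Longrightarrow> x < n \<and> y < n"
  unfolding mixed_graph_def by blast
lemma mg_D_E: "mixed_graph n E D \<Longrightarrow> D x y \<Longrightarrow> E x y"
  unfolding mixed_graph_def by blast
lemma mg_D_asym: "mixed_graph n E D \<Longrightarrow> D x y \<Longrightarrow> \<not> D y x"
  unfolding mixed_graph_def by blast

lemma Nent_herm: assumes "mixed_graph n E D" shows "Nent E D t s = cnj (Nent E D s t)"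
  using mg_E_sym[OF assms, of s t] mg_E_sym[OF assms, of t s] mg_D_asym[OF assms, of s t]
    mg_D_E[OF assms, of s t] mg_D_E[OF assms, of t s]
  unfolding Nent_def by (auto simp: cnj_omega)

lemma Nent_diag: assumes "mixed_graph n E D" shows "Nent E D s s = 0"
  using mg_E_irrefl[OF assms, of s] mg_D_E[OF assms, of s s] unfolding Nent_def by auto

lemma Nent_nz_iff: assumes "mixed_graph n E D" shows "(Nent E D s t \<noteq> 0) = E s t"
  using mg_D_E[OF assms, of s t] mg_D_E[OF assms, of t s] mg_E_sym[OF assms, of t s] omega_ne0 cnj_omega_ne0
  unfolding Nent_def by auto

lemma Nent_NZ: "mixed_graph n E D \<Longrightarrow> E s t \<Longrightarrow> Nent E D s t \<in> NZ"
  unfolding Nent_def NZ_alt by auto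

lemma Nent_out: "mixed_graph n E D \<Longrightarrow> \<not> (s < n \<and> t < n) \<Longrightarrow> Nent E D s t = 0"
  using Nent_nz_iff mg_E_range by blast

lemma T6_obtain: "z \<in> T6 \<Longrightarrow> \<exists>p\<in>set t6l. z = eis p"
  unfolding T6_eis by blast

lemma om_ne1: "omega \<noteq> 1" "cnj omega \<noteq> 1" "- omega \<noteq> 1" "omega * omega \<noteq> 1"
  "cnj omega \<noteq> - omega" "omega \<noteq> 0" "cnj omega \<noteq> 0"
  by (simp_all add: eis_omega eis_cnj_omega eis_1 eis_0 eis_simps)
lemma om_eqs: "omega * cnj omega = 1" "- (omega * omega) = cnj omega" "cnj omega * omega = 1"
  by (simp_all add: eis_omega eis_cnj_omega eis_1 eis_simps)

lemma T6_unit: "u \<in> T6 \<Longrightarrow> cnj u * u = 1"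
  unfolding T6_eis t6l_def by (auto simp: eis_1 eis_simps)
lemma T6_nz: "u \<in> T6 \<Longrightarrow> u \<noteq> 0"
  using T6_unit by fastforce
lemma T6_cnj: "u \<in> T6 \<Longrightarrow> cnj u \<in> T6"
  unfolding T6_eis t6l_def by (auto simp: eis_simps)
lemma T6_mult: "u \<in> T6 \<Longrightarrow> v \<in> T6 \<Longrightarrow> u * v \<in> T6"
  unfolding T6_eis t6l_def by (auto simp: eis_simps)

lemma cmul_ne: "(c::complex) \<noteq> 1 \<Longrightarrow> u \<noteq> 0 \<Longrightarrow> c * u \<noteq> u"
  by (metis mult_cancel_right2)
lemma cmul_ne2: "(c::complex) \<noteq> d \<Longrightarrow> u \<noteq> 0 \<Longrightarrow> c * u \<noteq> d * u"
  by simp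

lemma switch_Nent_aux:
  assumes mg: "mixed_graph n E D" and adm: "admissible n E D p" and xy: "x < n" "y < n"
    and nyx: "\<not> D y x"
  shows "Nent E (switch E D p) x y = cnj (p x) * Nent E D x y * p y"
proof -
  have ux: "p x \<in> T6" "p y \<in> T6" using adm xy unfolding admissible_def by blast+
  have u1: "cnj (p x) * p x = 1" "cnj (p y) * p y = 1" using ux T6_unit by blast+
  have nz: "p x \<noteq> 0" "p y \<noteq> 0" using ux T6_nz by blast+
  have s: "E x y = E y x" using mg mg_E_sym by blast
  show ?thesis
  proof (cases "E x y")
    case False
    then show ?thesis using s mg_D_E[OF mg, of x y] mg_D_E[OF mg, of y x]
      unfolding Nent_def switch_def undir_def by auto
  next
    case Exy: True
    show ?thesis
    proof (cases "D x y")
      case True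
      hence nd: "\<not> undir E D x y" "\<not> undir E D y x" unfolding undir_def by auto
      have sw1: "switch E D p x y = (p y = p x)" using True nd nyx unfolding switch_def by auto
      have sw2: "switch E D p y x = (p y = - omega * p x)" using True nd nyx unfolding switch_def by auto
      have N: "Nent E D x y = omega" using True unfolding Nent_def by simp
      have "p y = p x \<or> p y = cnj omega * p x \<or> p y = - omega * p x" using adm True unfolding admissible_def by blast
      moreover
      { assume h: "p y = p x"
        hence ?thesis unfolding N unfolding Nent_def sw1 sw2 using u1 by (simp add: algebra_simps) }
      moreover
      { assume h: "p y = cnj omega * p x"
        have "p y \<noteq> p x" unfolding h using cmul_ne om_ne1 nz by blast
        moreover have "p y \<noteq> - omega * p x" unfolding h using cmul_ne2 om_ne1 nz by blast
        ultimately have ?thesis unfolding N unfolding Nent_def sw1 sw2 using Exy h u1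
          by (simp add: algebra_simps) }
      moreover
      { assume h: "p y = - omega * p x"
        have "p y \<noteq> p x" unfolding h using cmul_ne om_ne1 nz by blast
        hence ?thesis unfolding N unfolding Nent_def sw1 sw2 using Exy h u1 om_eqs(2)
          by (simp add: algebra_simps) }
      ultimately show ?thesis by blast
    next
      case nxy: False
      hence nd: "undir E D x y" "undir E D y x" using nyx Exy s unfolding undir_def by auto
      have sw1: "switch E D p x y = (p y = omega * p x)" using nd nxy nyx unfolding switch_def by auto
      have sw2: "switch E D p y x = (p x = omega * p y)" using nd nxy nyx unfolding switch_def by auto
      have N: "Nent E D x y = 1" using nxy nyx Exy unfolding Nent_def by simp
      have "p y = p x \<or> p y = omega * p x \<or> p x = omega * p y" using adm nd unfolding admissible_def by blast
      moreover
      { assume h: "p y = p x"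
        have "p y \<noteq> omega * p x" unfolding h using cmul_ne[of omega "p x"] om_ne1 nz by metis
        moreover have "p x \<noteq> omega * p y" unfolding h using cmul_ne[of omega "p x"] om_ne1 nz by metis
        ultimately have ?thesis unfolding N unfolding Nent_def sw1 sw2 using Exy h u1 by simp }
      moreover
      { assume h: "p y = omega * p x"
        hence ?thesis unfolding N unfolding Nent_def sw1 sw2 using Exy h u1
          by (simp add: algebra_simps) }
      moreover
      { assume h: "p x = omega * p y"
        have "p y \<noteq> omega * p x" unfolding h
          using cmul_ne[of "omega * omega" "p y"] om_ne1 nz by (metis mult.assoc)
        hence ?thesis unfolding N unfolding Nent_def sw1 sw2 using Exy h u1
          by (simp add: algebra_simps) }
      ultimately show ?thesis by blast
    qed
  qed
qed

lemma switch_mg: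
  assumes mg: "mixed_graph n E D" and adm: "admissible n E D p"
  shows "mixed_graph n E (switch E D p)"
proof -
  have nz: "x < n \<Longrightarrow> p x \<noteq> 0" for x using adm T6_nz unfolding admissible_def by blast
  have E1: "switch E D p x y \<Longrightarrow> E x y" for x y
    using mg_D_E[OF mg, of x y] mg_D_E[OF mg, of y x] mg_E_sym[OF mg, of y x]
    unfolding switch_def undir_def by blast
  have A: "switch E D p x y \<Longrightarrow> \<not> switch E D p y x" for x y
  proof
    assume h1: "switch E D p x y" and h2: "switch E D p y x"
    have r: "x < n" "y < n" using E1[OF h1] mg_E_range[OF mg] by blast+
    have as: "D x y \<Longrightarrow> \<not> D y x" "D y x \<Longrightarrow> \<not> D x y" using mg_D_asym[OF mg] by blast+
    show False
      using h1
    proof (unfold switch_def, elim disjE conjE)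
      assume u: "undir E D x y" and e: "p y = omega * p x"
      hence "p x = omega * p y" using h2 unfolding switch_def undir_def by auto
      hence "(omega * omega) * p x = p x" using e by (simp add: algebra_simps)
      thus False using cmul_ne[OF om_ne1(4) nz[OF r(1)]] by simp
    next
      assume d: "D x y" and e: "p y = p x"
      hence "p y = - omega * p x" using h2 as unfolding switch_def undir_def by auto
      thus False using e cmul_ne[OF om_ne1(3) nz[OF r(1)]] by simp
    next
      assume d: "D y x" and e: "p x = - omega * p y"
      hence "p x = p y" using h2 as unfolding switch_def undir_def by auto
      thus False using e cmul_ne[OF om_ne1(3) nz[OF r(2)]] by simp
    qed
  qed
  show ?thesis using mg E1 A unfolding mixed_graph_def by blast
qed

lemma switch_Nent:
  assumes mg: "mixed_graph n E D" and adm: "admissible n E D p" and xy: "x < n" "y < n"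
  shows "Nent E (switch E D p) x y = cnj (p x) * Nent E D x y * p y"
proof (cases "D y x")
  case False
  then show ?thesis using switch_Nent_aux[OF assms] by blast
next
  case True
  hence "\<not> D x y" using mg_D_asym[OF mg] by blast
  hence "Nent E (switch E D p) y x = cnj (p y) * Nent E D y x * p x"
    using switch_Nent_aux[OF mg adm xy(2) xy(1)] by blast
  moreover have "Nent E (switch E D p) x y = cnj (Nent E (switch E D p) y x)"
    using Nent_herm[OF switch_mg[OF mg adm]] by blast
  moreover have "Nent E D y x = cnj (Nent E D x y)" using Nent_herm[OF mg] by blast
  ultimately show ?thesis by (simp add: algebra_simps)
qed

lemma rev_mg: "mixed_graph n E D \<Longrightarrow> mixed_graph n E (\<lambda>x y. D y x)"
  unfolding mixed_graph_def by blast

lemma rev_Nent: "mixed_graph n E D \<Longrightarrow> Nent E (\<lambda>x y. D y x) x y = cnj (Nent E D x y)"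
  using mg_D_asym[of n E D x y] by (auto simp: Nent_def cnj_omega)

lemma sw_equiv_inv:
  assumes "switching_equiv n E D D'" and mg: "mixed_graph n E D"
  shows "mixed_graph n E D' \<and> (\<exists>q b. (\<forall>x<n. q x \<noteq> 0) \<and> (\<forall>x<n. \<forall>y<n.
     Nent E D' x y = (if b then cnj (cnj (q x) * Nent E D x y * q y) else cnj (q x) * Nent E D x y * q y)))"
  using assms(1) unfolding switching_equiv_def
proof (induction rule: rtranclp_induct)
  case base
  show ?case using mg by (rule_tac conjI, simp, rule_tac exI[of _ "\<lambda>_. 1"], rule_tac exI[of _ False]) simp
next
  case (step D1 D2)
  from step.IH obtain q b where mg1: "mixed_graph n E D1" and q: "\<forall>x<n. q x \<noteq> 0"
    and f: "\<forall>x<n. \<forall>y<n. Nent E D1 x y = (if b then cnj (cnj (q x) * Nent E D x y * q y) else cnj (q x) * Nent E D x y * q y)"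
    by blast
  from step.hyps(2) show ?case unfolding switch_step_def
  proof (elim disjE exE conjE)
    fix p assume adm: "admissible n E D1 p" and D2: "D2 = switch E D1 p"
    have pnz: "x < n \<Longrightarrow> p x \<noteq> 0" for x using adm T6_nz unfolding admissible_def by blast
    show ?case
    proof (cases b)
      case True
      define q' where "q' = (\<lambda>x. q x * cnj (p x))"
      have "\<forall>x<n. q' x \<noteq> 0" using q pnz unfolding q'_def by simp
      moreover have "\<forall>x<n. \<forall>y<n. Nent E D2 x y = cnj (cnj (q' x) * Nent E D x y * q' y)"
      proof (intro allI impI)
        fix x y assume xy: "x < n" "y < n"
        have "Nent E D2 x y = cnj (p x) * cnj (cnj (q x) * Nent E D x y * q y) * p y"
          using f True switch_Nent[OF mg1 adm xy] xy unfolding D2 by simp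
        thus "Nent E D2 x y = cnj (cnj (q' x) * Nent E D x y * q' y)"
          unfolding q'_def by (simp only: complex_cnj_mult complex_cnj_cnj mult.assoc mult.left_commute)
      qed
      ultimately have c: "(\<forall>x<n. q' x \<noteq> 0) \<and> (\<forall>x<n. \<forall>y<n. Nent E D2 x y = cnj (cnj (q' x) * Nent E D x y * q' y))" by blast
      show ?thesis
        apply (rule conjI) using switch_mg[OF mg1 adm] D2 apply simp
        apply (rule exI[of _ q'], rule exI[of _ True]) using c by simp
    next
      case False
      define q' where "q' = (\<lambda>x. q x * p x)"
      have "\<forall>x<n. q' x \<noteq> 0" using q pnz unfolding q'_def by simp
      moreover have "\<forall>x<n. \<forall>y<n. Nent E D2 x y = cnj (q' x) * Nent E D x y * q' y"
      proof (intro allI impI)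
        fix x y assume xy: "x < n" "y < n"
        have "Nent E D2 x y = cnj (p x) * (cnj (q x) * Nent E D x y * q y) * p y"
          using f False switch_Nent[OF mg1 adm xy] xy unfolding D2 by simp
        thus "Nent E D2 x y = cnj (q' x) * Nent E D x y * q' y"
          unfolding q'_def by (simp only: complex_cnj_mult complex_cnj_cnj mult.assoc mult.left_commute)
      qed
      ultimately have c: "(\<forall>x<n. q' x \<noteq> 0) \<and> (\<forall>x<n. \<forall>y<n. Nent E D2 x y = cnj (q' x) * Nent E D x y * q' y)" by blast
      show ?thesis
        apply (rule conjI) using switch_mg[OF mg1 adm] D2 apply simp
        apply (rule exI[of _ q'], rule exI[of _ False]) using c by simp
    qed
  next
    assume D2: "D2 = (\<lambda>x y. D1 y x)"
    have "\<forall>x<n. \<forall>y<n. Nent E D2 x y = (if \<not> b then cnj (cnj (q x) * Nent E D x y * q y) else cnj (q x) * Nent E D x y * q y)"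
      using f rev_Nent[OF mg1] unfolding D2 by simp
    show ?case
      apply (rule conjI) using rev_mg[OF mg1] D2 apply simp
      apply (rule exI[of _ q], rule exI[of _ "\<not> b"]) using q \<open>\<forall>x<n. \<forall>y<n. Nent E D2 x y = _\<close> by simp
  qed
qed

lemma twins_prop:
  assumes mg: "mixed_graph n E D" and tw: "twins n E D u v"
  shows "\<exists>m. m \<noteq> 0 \<and> (\<forall>j<n. Nent E D u j = m * Nent E D v j)"
proof -
  from tw obtain D' where uv: "u < n" "v < n" and se: "switching_equiv n E D D'"
    and eq: "\<forall>j<n. Nent E D' u j = Nent E D' v j" unfolding twins_def by blast
  from sw_equiv_inv[OF se mg] obtain q b where q: "\<forall>x<n. q x \<noteq> 0"
    and f: "\<forall>x<n. \<forall>y<n. Nent E D' x y = (if b then cnj (cnj (q x) * Nent E D x y * q y) else cnj (q x) * Nent E D x y * q y)"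
    by blast
  have "cnj (q u) * Nent E D u j * q j = cnj (q v) * Nent E D v j * q j" if j: "j < n" for j
  proof -
    have "(if b then cnj (cnj (q u) * Nent E D u j * q j) else cnj (q u) * Nent E D u j * q j)
        = (if b then cnj (cnj (q v) * Nent E D v j * q j) else cnj (q v) * Nent E D v j * q j)"
      using eq f uv j by metis
    thus ?thesis by (cases b) (metis complex_cnj_cnj, simp)
  qed
  hence "Nent E D u j = (cnj (q v) / cnj (q u)) * Nent E D v j" if j: "j < n" for j
    using q uv j that by (auto simp: field_simps)
  moreover have "cnj (q v) / cnj (q u) \<noteq> 0" using q uv by simp
  ultimately show ?thesis by blast
qed


lemma finA: "m \<in> T6 \<Longrightarrow> w \<in> A4 \<Longrightarrow> m * w = 1 \<Longrightarrow> m = 1 \<or> 1 = omega * m \<or> m = omega"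
  unfolding T6_eis A4_def t6l_def alph_def by (auto simp: eis_omega eis_1 eis_simps)
lemma finB: "m \<in> T6 \<Longrightarrow> w \<in> A4 \<Longrightarrow> m * w = omega \<Longrightarrow> 1 = m \<or> 1 = cnj omega * m \<or> 1 = - omega * m"
  unfolding T6_eis A4_def t6l_def alph_def by (auto simp: eis_omega eis_cnj_omega eis_1 eis_simps)
lemma finC: "m \<in> T6 \<Longrightarrow> w \<in> A4 \<Longrightarrow> m * w = cnj omega \<Longrightarrow> m = 1 \<or> m = cnj omega * 1 \<or> m = - omega * 1"
  unfolding T6_eis A4_def t6l_def alph_def by (auto simp: eis_omega eis_cnj_omega eis_1 eis_simps)

lemma one_T6: "1 \<in> T6" unfolding T6_def by simp

lemma prop_twins:
  assumes mg: "mixed_graph n E D" and st: "s < n" "t < n" and m: "m \<in> T6"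
    and pr: "\<forall>j<n. Nent E D s j = m * Nent E D t j"
  shows "twins n E D s t"
proof (cases "s = t")
  case True
  then show ?thesis unfolding twins_def switching_equiv_def using st by blast
next
  case False
  define p where "p = (\<lambda>x. if x = s then m else 1)"
  have prj: "Nent E D s j = m * Nent E D t j" for j
    using pr Nent_out[OF mg, of s j] Nent_out[OF mg, of t j] st by (cases "j < n") auto
  have adm: "admissible n E D p"
    unfolding admissible_def
  proof (intro conjI allI impI)
    fix x assume "x < n" thus "p x \<in> T6" unfolding p_def using m one_T6 by simp
  next
    fix x y assume u: "undir E D x y"
    have xy: "x \<noteq> y" using u mg_E_irrefl[OF mg] unfolding undir_def by blast
    show "p y = p x \<or> p y = omega * p x \<or> p x = omega * p y"
    proof (cases "x = s \<or> y = s")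
      case False thus ?thesis unfolding p_def by simp
    next
      case True
      show ?thesis
      proof (cases "x = s")
        case True
        have "Nent E D s y = 1" using u True unfolding undir_def Nent_def by simp
        hence "m * Nent E D t y = 1" using prj by simp
        hence "m = 1 \<or> 1 = omega * m \<or> m = omega" using finA[OF m Nent_A4] by blast
        thus ?thesis unfolding p_def using True xy by auto
      next
        case False
        hence ys: "y = s" using \<open>x = s \<or> y = s\<close> by blast
        have "Nent E D x s = 1" using u ys unfolding undir_def Nent_def by simp
        hence "Nent E D s x = 1" using Nent_herm[OF mg, of s x] by simp
        hence "m * Nent E D t x = 1" using prj by simp
        hence "m = 1 \<or> 1 = omega * m \<or> m = omega" using finA[OF m Nent_A4] by blast
        thus ?thesis unfolding p_def using ys xy by auto
      qed
    qed
  next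
    fix x y assume d: "D x y"
    have xy: "x \<noteq> y" using mg_D_E[OF mg d] mg_E_irrefl[OF mg] by blast
    show "p y = p x \<or> p y = cnj omega * p x \<or> p y = - omega * p x"
    proof (cases "x = s \<or> y = s")
      case False thus ?thesis unfolding p_def by simp
    next
      case True
      show ?thesis
      proof (cases "x = s")
        case True
        have "Nent E D s y = omega" using d True unfolding Nent_def by simp
        hence "m * Nent E D t y = omega" using prj by simp
        hence "1 = m \<or> 1 = cnj omega * m \<or> 1 = - omega * m" using finB[OF m Nent_A4] by blast
        thus ?thesis unfolding p_def using True xy by auto
      next
        case False
        hence ys: "y = s" using \<open>x = s \<or> y = s\<close> by blast
        have "Nent E D x s = omega" using d ys unfolding Nent_def by simp
        hence "Nent E D s x = cnj omega" using Nent_herm[OF mg, of s x] by simp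
        hence "m * Nent E D t x = cnj omega" using prj by simp
        hence "m = 1 \<or> m = cnj omega * 1 \<or> m = - omega * 1" using finC[OF m Nent_A4] by blast
        thus ?thesis unfolding p_def using ys xy by auto
      qed
    qed
  qed
  have se: "switching_equiv n E D (switch E D p)"
    unfolding switching_equiv_def switch_step_def using adm by blast
  have mu: "cnj m * m = 1" using T6_unit[OF m] .
  have "\<forall>j<n. Nent E (switch E D p) s j = Nent E (switch E D p) t j"
  proof (intro allI impI)
    fix j assume j: "j < n"
    have "Nent E (switch E D p) s j = cnj m * (m * Nent E D t j) * p j"
      using switch_Nent[OF mg adm st(1) j] prj unfolding p_def by simp
    also have "\<dots> = Nent E D t j * p j" using mu by (simp add: algebra_simps)
    also have "\<dots> = Nent E (switch E D p) t j"
      using switch_Nent[OF mg adm st(2) j] False unfolding p_def by simp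
    finally show "Nent E (switch E D p) s j = Nent E (switch E D p) t j" .
  qed
  then show ?thesis unfolding twins_def using st se by blast
qed

lemma (in vec_space) rank_le3:
  assumes A: "A \<in> carrier_mat n n"
    and f: "\<forall>i<n. \<forall>j<n. A $$ (i, j) = f1 i * g1 j + f2 i * g2 j + f3 i * g3 j"
  shows "rank A \<le> 3"
proof -
  define A1 where "A1 = mat n n (\<lambda>(i, j). f1 i * g1 j)"
  define A2 where "A2 = mat n n (\<lambda>(i, j). f2 i * g2 j)"
  define A3 where "A3 = mat n n (\<lambda>(i, j). f3 i * g3 j)"
  have c: "A1 \<in> carrier_mat n n" "A2 \<in> carrier_mat n n" "A3 \<in> carrier_mat n n"
    unfolding A1_def A2_def A3_def by auto
  have eq: "A = A1 + A2 + A3"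
    by (rule eq_matI) (use A f in \<open>auto simp: A1_def A2_def A3_def\<close>)
  have r1: "rank A1 \<le> 1" by (rule rank_le_1_product_entries[OF c(1)]) (auto simp: A1_def)
  have r2: "rank A2 \<le> 1" by (rule rank_le_1_product_entries[OF c(2)]) (auto simp: A2_def)
  have r3: "rank A3 \<le> 1" by (rule rank_le_1_product_entries[OF c(3)]) (auto simp: A3_def)
  have h1: "rank (A1 + A2 + A3) \<le> rank (A1 + A2) + rank A3"
    by (rule rank_subadditive) (use c in auto)
  have h2: "rank (A1 + A2) \<le> rank A1 + rank A2" by (rule rank_subadditive[OF c(1,2)])
  show ?thesis using h1 h2 r1 r2 r3 unfolding eq by linarith
qed

lemma (in vec_space) rank_ge3:
  assumes A: "A \<in> carrier_mat n n" and j: "j1 < n" "j2 < n" "j3 < n"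
    and ind: "\<And>y1 y2 y3. (\<forall>i<n. y1 * A $$ (i, j1) + y2 * A $$ (i, j2) + y3 * A $$ (i, j3) = 0)
       \<Longrightarrow> y1 = 0 \<and> y2 = 0 \<and> y3 = 0"
  shows "3 \<le> rank A"
proof -
  have ci: "col A j $ i = A $$ (i, j)" if "i < n" "j < n" for i j using A that by simp
  have cc: "col A j \<in> carrier_vec n" for j using A by (simp add: carrier_vecI)
  have d12: "col A j1 \<noteq> col A j2"
  proof
    assume h: "col A j1 = col A j2"
    have "\<forall>i<n. 1 * A $$ (i, j1) + (-1) * A $$ (i, j2) + 0 * A $$ (i, j3) = 0"
    proof (intro allI impI)
      fix i assume i: "i < n"
      have "A $$ (i, j1) = A $$ (i, j2)" using ci[OF i j(1)] ci[OF i j(2)] h by simp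
      thus "1 * A $$ (i, j1) + (-1) * A $$ (i, j2) + 0 * A $$ (i, j3) = 0" by simp
    qed
    from ind[OF this] show False by simp
  qed
  have d13: "col A j1 \<noteq> col A j3"
  proof
    assume h: "col A j1 = col A j3"
    have "\<forall>i<n. 1 * A $$ (i, j1) + 0 * A $$ (i, j2) + (-1) * A $$ (i, j3) = 0"
    proof (intro allI impI)
      fix i assume i: "i < n"
      have "A $$ (i, j1) = A $$ (i, j3)" using ci[OF i j(1)] ci[OF i j(3)] h by simp
      thus "1 * A $$ (i, j1) + 0 * A $$ (i, j2) + (-1) * A $$ (i, j3) = 0" by simp
    qed
    from ind[OF this] show False by simp
  qed
  have d23: "col A j2 \<noteq> col A j3"
  proof
    assume h: "col A j2 = col A j3"
    have "\<forall>i<n. 0 * A $$ (i, j1) + 1 * A $$ (i, j2) + (-1) * A $$ (i, j3) = 0"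
    proof (intro allI impI)
      fix i assume i: "i < n"
      have "A $$ (i, j2) = A $$ (i, j3)" using ci[OF i j(2)] ci[OF i j(3)] h by simp
      thus "0 * A $$ (i, j1) + 1 * A $$ (i, j2) + (-1) * A $$ (i, j3) = 0" by simp
    qed
    from ind[OF this] show False by simp
  qed
  define U where "U = {col A j1, col A j2, col A j3}"
  have card: "card U = 3" unfolding U_def using d12 d13 d23 by simp
  have sub: "U \<subseteq> set (cols A)" unfolding U_def cols_def using A j by auto
  have UC: "U \<subseteq> carrier_vec n" unfolding U_def using cc by auto
  have li: "lin_indpt U"
  proof (rule finite_lin_indpt2[OF _ UC])
    show "finite U" unfolding U_def by simp
    fix a assume lc: "lincomb a U = 0\<^sub>v n"
    have "\<forall>i<n. a (col A j1) * A $$ (i, j1) + a (col A j2) * A $$ (i, j2) + a (col A j3) * A $$ (i, j3) = 0"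
    proof (intro allI impI)
      fix i assume i: "i < n"
      have "lincomb a U $ i = (\<Sum>x\<in>U. a x * x $ i)" by (rule lincomb_index[OF i]) (use UC in simp)
      also have "\<dots> = a (col A j1) * col A j1 $ i + a (col A j2) * col A j2 $ i + a (col A j3) * col A j3 $ i"
        unfolding U_def using d12 d13 d23 by (simp add: algebra_simps)
      finally show "a (col A j1) * A $$ (i, j1) + a (col A j2) * A $$ (i, j2) + a (col A j3) * A $$ (i, j3) = 0"
        using lc i ci j by simp
    qed
    from ind[OF this] show "\<forall>v\<in>U. a v = 0" unfolding U_def by simp
  qed
  show ?thesis using rank_ge_card_indpt[OF A sub li] card by simp
qed


lemma (in vec_space) rank3_struct:
  assumes A: "A \<in> carrier_mat n n" and r: "rank A = 3"
  shows "\<exists>j1 j2 j3. j1 < n \<and> j2 < n \<and> j3 < n \<and>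
    (\<forall>y1 y2 y3. (\<forall>i<n. y1 * A $$ (i, j1) + y2 * A $$ (i, j2) + y3 * A $$ (i, j3) = 0)
       \<longrightarrow> y1 = 0 \<and> y2 = 0 \<and> y3 = 0) \<and>
    (\<forall>v<n. \<exists>x1 x2 x3. \<forall>i<n. A $$ (i, v) = x1 * A $$ (i, j1) + x2 * A $$ (i, j2) + x3 * A $$ (i, j3))"
proof -
  define P where "P = (\<lambda>T. T \<subseteq> set (cols A) \<and> lin_indpt T)"
  have colsC: "set (cols A) \<subseteq> carrier_vec n" using A by (auto simp: cols_def carrier_vecI)
  have "lin_indpt {}" by (rule finite_lin_indpt2) auto
  hence P0: "P {}" unfolding P_def by auto
  obtain M where finM: "finite M" and mx: "maximal M P"
    using maximal_exists_superset[of "set (cols A)" P "{}"] P0 unfolding P_def by auto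
  have PM: "M \<subseteq> set (cols A)" "lin_indpt M" using mx unfolding maximal_def P_def by auto
  have MC: "M \<subseteq> carrier_vec n" using PM colsC by auto
  have "card M = 3" using rank_card_indpt[OF A] mx r unfolding P_def by simp
  then obtain c1 c2 c3 where M: "M = {c1, c2, c3}" and d: "c1 \<noteq> c2" "c2 \<noteq> c3" "c1 \<noteq> c3"
    by (auto simp: card_3_iff)
  have "\<exists>j<n. c = col A j" if "c \<in> M" for c
  proof -
    have "c \<in> col A ` {0..<n}" using that PM(1) A unfolding cols_def by auto
    thus ?thesis by auto
  qed
  note ex = this
  obtain j1 where j1: "j1 < n" "c1 = col A j1" using ex[of c1] unfolding M by blast
  obtain j2 where j2: "j2 < n" "c2 = col A j2" using ex[of c2] unfolding M by blast
  obtain j3 where j3: "j3 < n" "c3 = col A j3" using ex[of c3] unfolding M by blast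
  have j: "j1 < n" "j2 < n" "j3 < n" and cj: "c1 = col A j1" "c2 = col A j2" "c3 = col A j3"
    using j1 j2 j3 by auto
  have ci: "col A j $ i = A $$ (i, j)" if "i < n" "j < n" for i j using A that by simp
  have lcM: "lincomb a M $ i = a c1 * A $$ (i, j1) + a c2 * A $$ (i, j2) + a c3 * A $$ (i, j3)"
    if i: "i < n" for a i
  proof -
    have "lincomb a M $ i = (\<Sum>x\<in>M. a x * x $ i)" by (rule lincomb_index[OF i MC])
    also have "\<dots> = a c1 * c1 $ i + a c2 * c2 $ i + a c3 * c3 $ i"
      unfolding M using d by (simp add: algebra_simps)
    finally show ?thesis unfolding cj using ci i j by simp
  qed
  have ind: "y1 = 0 \<and> y2 = 0 \<and> y3 = 0"
    if h: "\<forall>i<n. y1 * A $$ (i, j1) + y2 * A $$ (i, j2) + y3 * A $$ (i, j3) = 0" for y1 y2 y3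
  proof (rule ccontr)
    assume nz: "\<not> (y1 = 0 \<and> y2 = 0 \<and> y3 = 0)"
    define a where "a = (\<lambda>w. if w = c1 then y1 else if w = c2 then y2 else y3)"
    have ac: "a c1 = y1" "a c2 = y2" "a c3 = y3" unfolding a_def using d by auto
    have lc0: "lincomb a M = 0\<^sub>v n"
    proof (rule eq_vecI)
      show "dim_vec (lincomb a M) = dim_vec (0\<^sub>v n)" using lincomb_closed[OF MC] by auto
      fix i assume "i < dim_vec (0\<^sub>v n)"
      hence i: "i < n" by simp
      show "lincomb a M $ i = 0\<^sub>v n $ i" using lcM[OF i] h i ac by simp
    qed
    obtain c where c: "c \<in> M" "a c \<noteq> 0" using nz ac unfolding M by auto
    have "lin_dep M" by (rule lin_dep_crit[OF finM subset_refl _ c(1)]) (use c lc0 in auto)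
    thus False using PM(2) by blast
  qed
  have span: "\<exists>x1 x2 x3. \<forall>i<n. A $$ (i, v) = x1 * A $$ (i, j1) + x2 * A $$ (i, j2) + x3 * A $$ (i, j3)"
    if v: "v < n" for v
  proof -
    have cv: "col A v \<in> carrier_vec n" using A by (simp add: carrier_vecI)
    have "col A v \<in> span M"
    proof (cases "col A v \<in> M")
      case True thus ?thesis using in_own_span[OF MC] by blast
    next
      case False
      have "M \<union> {col A v} \<subseteq> set (cols A)" using PM(1) v A unfolding cols_def by auto
      moreover have "M \<union> {col A v} \<noteq> M" using False by blast
      ultimately have "lin_dep (M \<union> {col A v})" using mx unfolding maximal_def P_def by blast
      thus ?thesis using lin_dep_iff_in_span[OF MC PM(2) cv False] by blast
    qed
    then obtain a where a: "lincomb a M = col A v" using finite_in_span[OF finM MC] by blast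
    show ?thesis
    proof (intro exI allI impI)
      fix i assume i: "i < n"
      have "A $$ (i, v) = lincomb a M $ i" using a ci[OF i v] by simp
      thus "A $$ (i, v) = a c1 * A $$ (i, j1) + a c2 * A $$ (i, j2) + a c3 * A $$ (i, j3)"
        using lcM[OF i] by simp
    qed
  qed
  show ?thesis using j ind span by blast
qed

lemma adj_solve:
  assumes "c1 = x * x2 + y * x3" "c2 = cnj x * x1 + z * x3" "c3 = cnj y * x1 + cnj z * x2"
  shows "detC x y z * x1 = ad1C x y z c1 c2 c3" "detC x y z * x2 = ad2C x y z c1 c2 c3"
    "detC x y z * x3 = ad3C x y z c1 c2 c3"
  unfolding assms detC_def ad1C_def ad2C_def ad3C_def by (simp_all add: algebra_simps)

lemma B_adj:
  "x * ad2C x y z c1 c2 c3 + y * ad3C x y z c1 c2 c3 = detC x y z * c1"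
  "cnj x * ad1C x y z c1 c2 c3 + z * ad3C x y z c1 c2 c3 = detC x y z * c2"
  "cnj y * ad1C x y z c1 c2 c3 + cnj z * ad2C x y z c1 c2 c3 = detC x y z * c3"
  unfolding detC_def ad1C_def ad2C_def ad3C_def by (simp_all add: algebra_simps)

lemma QC_lin: "QC x y z u1 u2 u3 (m * c1) (m * c2) (m * c3) = m * QC x y z u1 u2 u3 c1 c2 c3"
  unfolding QC_def ad1C_def ad2C_def ad3C_def by (simp add: algebra_simps)

lemma QC_zero: "QC x y z u1 u2 u3 0 0 0 = 0"
  unfolding QC_def ad1C_def ad2C_def ad3C_def by simp

lemma Nmat_carrier: "Nmat n E D \<in> carrier_mat n n"
  unfolding Nmat_def by simp
lemma Nmat_index: "i < n \<Longrightarrow> j < n \<Longrightarrow> Nmat n E D $$ (i, j) = Nent E D i j"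
  unfolding Nmat_def by simp

lemma row_rep:
  assumes mg: "mixed_graph n E D" and tr: "twin_reduction n E D S" and v: "v < n"
  shows "\<exists>s\<in>S. \<exists>m. m \<noteq> 0 \<and> (\<forall>j<n. Nent E D v j = m * Nent E D s j)"
proof -
  obtain s where s: "s \<in> S" "twins n E D v s" using tr v unfolding twin_reduction_def by blast
  thus ?thesis using twins_prop[OF mg s(2)] by blast
qed

lemma col_rep:
  assumes mg: "mixed_graph n E D" and tr: "twin_reduction n E D S" and v: "v < n"
  shows "\<exists>s\<in>S. \<exists>m. \<forall>i<n. Nent E D i v = m * Nent E D i s"
proof -
  obtain s m where s: "s \<in> S" "\<forall>j<n. Nent E D v j = m * Nent E D s j" using row_rep[OF assms] by blast
  have "\<forall>i<n. Nent E D i v = cnj m * Nent E D i s"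
  proof (intro allI impI)
    fix i assume i: "i < n"
    have "Nent E D i v = cnj (Nent E D v i)" using Nent_herm[OF mg, of v i] by simp
    also have "\<dots> = cnj (m * Nent E D s i)" using s(2) i by simp
    also have "\<dots> = cnj m * Nent E D i s" using Nent_herm[OF mg, of s i] by simp
    finally show "Nent E D i v = cnj m * Nent E D i s" .
  qed
  thus ?thesis using s(1) by blast
qed

lemma tri_indep:
  assumes mg: "mixed_graph n E D" and abc: "a < n" "b < n" "c < n"
    and E: "E a b" "E a c" "E b c"
    and h: "\<forall>i<n. y1 * Nent E D i a + y2 * Nent E D i b + y3 * Nent E D i c = 0"
  shows "y1 = 0 \<and> y2 = 0 \<and> y3 = 0"
proof -
  let ?x = "Nent E D a b" and ?y = "Nent E D a c" and ?z = "Nent E D b c"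
  have nz: "?x \<in> NZ" "?y \<in> NZ" "?z \<in> NZ" using Nent_NZ[OF mg] E by blast+
  have dz: "detC ?x ?y ?z \<noteq> 0" using fc1C[OF nz] .
  have d: "Nent E D a a = 0" "Nent E D b b = 0" "Nent E D c c = 0" using Nent_diag[OF mg] by blast+
  have hm: "Nent E D b a = cnj ?x" "Nent E D c a = cnj ?y" "Nent E D c b = cnj ?z"
    using Nent_herm[OF mg] by blast+
  have ha: "y1 * Nent E D a a + y2 * Nent E D a b + y3 * Nent E D a c = 0" using h abc(1) by blast
  have hb: "y1 * Nent E D b a + y2 * Nent E D b b + y3 * Nent E D b c = 0" using h abc(2) by blast
  have hc: "y1 * Nent E D c a + y2 * Nent E D c b + y3 * Nent E D c c = 0" using h abc(3) by blast
  have e1: "0 = ?x * y2 + ?y * y3" using ha d hm by (simp add: algebra_simps)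
  have e2: "0 = cnj ?x * y1 + ?z * y3" using hb d hm by (simp add: algebra_simps)
  have e3: "0 = cnj ?y * y1 + cnj ?z * y2" using hc d hm by (simp add: algebra_simps)
  note s = adj_solve[OF e1 e2 e3]
  have "ad1C ?x ?y ?z 0 0 0 = 0" "ad2C ?x ?y ?z 0 0 0 = 0" "ad3C ?x ?y ?z 0 0 0 = 0"
    unfolding ad1C_def ad2C_def ad3C_def by simp_all
  thus ?thesis using s dz by simp
qed

lemma rank_le3_gen:
  assumes mg: "mixed_graph n E D" and tr: "twin_reduction n E D S"
    and sp: "\<forall>s\<in>S. \<exists>w1 w2 w3. \<forall>i<n. Nent E D i s = w1 * Nent E D i a + w2 * Nent E D i b + w3 * Nent E D i c"
  shows "vec_space.rank n (Nmat n E D) \<le> 3"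
proof -
  have ex: "\<exists>w. \<forall>i<n. Nent E D i j = fst w * Nent E D i a + fst (snd w) * Nent E D i b + snd (snd w) * Nent E D i c"
    if j: "j < n" for j
  proof -
    obtain s m where s: "s \<in> S" "\<forall>i<n. Nent E D i j = m * Nent E D i s" using col_rep[OF mg tr j] by blast
    obtain w1 w2 w3 where w: "\<forall>i<n. Nent E D i s = w1 * Nent E D i a + w2 * Nent E D i b + w3 * Nent E D i c"
      using sp s(1) by blast
    have "\<forall>i<n. Nent E D i j = (m * w1) * Nent E D i a + (m * w2) * Nent E D i b + (m * w3) * Nent E D i c"
      using s(2) w by (simp add: algebra_simps)
    thus ?thesis by (intro exI[of _ "(m * w1, m * w2, m * w3)"]) simp
  qed
  define W where "W = (\<lambda>j. SOME w. \<forall>i<n. Nent E D i j = fst w * Nent E D i a + fst (snd w) * Nent E D i b + snd (snd w) * Nent E D i c)"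
  have W: "\<forall>i<n. Nent E D i j = fst (W j) * Nent E D i a + fst (snd (W j)) * Nent E D i b + snd (snd (W j)) * Nent E D i c"
    if "j < n" for j
    unfolding W_def using someI_ex[OF ex[OF that]] .
  have "\<forall>i<n. \<forall>j<n. Nmat n E D $$ (i, j) = Nent E D i a * fst (W j) + Nent E D i b * fst (snd (W j)) + Nent E D i c * snd (snd (W j))"
    using W by (simp add: Nmat_index algebra_simps)
  from vec_space.rank_le3[OF Nmat_carrier this] show ?thesis .
qed

lemma rank_ge3_tri:
  assumes mg: "mixed_graph n E D" and abc: "a < n" "b < n" "c < n"
    and E: "E a b" "E a c" "E b c"
  shows "3 \<le> vec_space.rank n (Nmat n E D)"
proof (rule vec_space.rank_ge3[OF Nmat_carrier abc])
  fix y1 y2 y3 :: complex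
  assume "\<forall>i<n. y1 * Nmat n E D $$ (i, a) + y2 * Nmat n E D $$ (i, b) + y3 * Nmat n E D $$ (i, c) = 0"
  hence "\<forall>i<n. y1 * Nent E D i a + y2 * Nent E D i b + y3 * Nent E D i c = 0"
    using abc by (simp add: Nmat_index)
  thus "y1 = 0 \<and> y2 = 0 \<and> y3 = 0" using tri_indep[OF mg abc E] by blast
qed


lemma rank_tri_case:
  assumes mg: "mixed_graph n E D" and tr: "twin_reduction n E D S" and S: "S = {a, b, c}"
    and E: "E a b" "E a c" "E b c"
  shows "vec_space.rank n (Nmat n E D) = 3"
proof -
  have abc: "a < n" "b < n" "c < n" using tr S unfolding twin_reduction_def by auto
  have "\<forall>s\<in>S. \<exists>w1 w2 w3. \<forall>i<n. Nent E D i s = w1 * Nent E D i a + w2 * Nent E D i b + w3 * Nent E D i c"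
  proof
    fix s assume "s \<in> S"
    hence "s = a \<or> s = b \<or> s = c" using S by blast
    thus "\<exists>w1 w2 w3. \<forall>i<n. Nent E D i s = w1 * Nent E D i a + w2 * Nent E D i b + w3 * Nent E D i c"
    proof (elim disjE)
      assume "s = a" thus ?thesis by (intro exI[of _ 1] exI[of _ 0]) simp
    next
      assume "s = b" thus ?thesis by (intro exI[of _ 0] exI[of _ 1] exI[of _ 0]) simp
    next
      assume "s = c" thus ?thesis by (intro exI[of _ 0] exI[of _ 0] exI[of _ 1]) simp
    qed
  qed
  from rank_le3_gen[OF mg tr this] rank_ge3_tri[OF mg abc E] show ?thesis by linarith
qed

lemma rank_K4_case:
  assumes mg: "mixed_graph n E D" and tr: "twin_reduction n E D S" and S: "S = {a, b, c, d}"
    and E: "E a b" "E a c" "E b c" "E a d" "E b d" "E c d"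
    and opt: "opt1C (Nent E D a b) (Nent E D a c) (Nent E D b c) (Nent E D a d) (Nent E D b d) (Nent E D c d)"
  shows "vec_space.rank n (Nmat n E D) = 3"
proof -
  have abc: "a < n" "b < n" "c < n" "d < n" using tr S unfolding twin_reduction_def by auto
  let ?x = "Nent E D a b" and ?y = "Nent E D a c" and ?z = "Nent E D b c"
  let ?c1 = "Nent E D a d" and ?c2 = "Nent E D b d" and ?c3 = "Nent E D c d"
  let ?det = "detC ?x ?y ?z"
  let ?a1 = "ad1C ?x ?y ?z ?c1 ?c2 ?c3" and ?a2 = "ad2C ?x ?y ?z ?c1 ?c2 ?c3" and ?a3 = "ad3C ?x ?y ?z ?c1 ?c2 ?c3"
  have nz: "?x \<in> NZ" "?y \<in> NZ" "?z \<in> NZ" "?c1 \<in> NZ" "?c2 \<in> NZ" "?c3 \<in> NZ"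
    using Nent_NZ[OF mg] E by blast+
  have dz: "?det \<noteq> 0" using fc1C[OF nz(1-3)] .
  have Q0: "QC ?x ?y ?z ?c1 ?c2 ?c3 ?c1 ?c2 ?c3 = 0" using fc2C[OF nz opt] .
  have dg: "Nent E D a a = 0" "Nent E D b b = 0" "Nent E D c c = 0" "Nent E D d d = 0"
    using Nent_diag[OF mg] by blast+
  have hm: "Nent E D b a = cnj ?x" "Nent E D c a = cnj ?y" "Nent E D c b = cnj ?z"
    "Nent E D d a = cnj ?c1" "Nent E D d b = cnj ?c2" "Nent E D d c = cnj ?c3"
    using Nent_herm[OF mg] by blast+
  have ba1: "?x * ?a2 + ?y * ?a3 = ?det * ?c1" by (rule B_adj(1))
  have ba2: "cnj ?x * ?a1 + ?z * ?a3 = ?det * ?c2" by (rule B_adj(2))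
  have ba3: "cnj ?y * ?a1 + cnj ?z * ?a2 = ?det * ?c3" by (rule B_adj(3))
  have key: "?det * Nent E D r d = ?a1 * Nent E D r a + ?a2 * Nent E D r b + ?a3 * Nent E D r c"
    if r: "r \<in> S" for r
  proof -
    have "r = a \<or> r = b \<or> r = c \<or> r = d" using r S by blast
    thus ?thesis
    proof (elim disjE)
      assume "r = a" thus ?thesis using ba1 dg by (simp add: algebra_simps)
    next
      assume "r = b" thus ?thesis using ba2 dg hm by (simp add: algebra_simps)
    next
      assume "r = c" thus ?thesis using ba3 dg hm by (simp add: algebra_simps)
    next
      assume "r = d" thus ?thesis using Q0 dg hm unfolding QC_def by (simp add: algebra_simps)
    qed
  qed
  have spd: "\<forall>i<n. Nent E D i d = (?a1 / ?det) * Nent E D i a + (?a2 / ?det) * Nent E D i b + (?a3 / ?det) * Nent E D i c"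
  proof (intro allI impI)
    fix i assume i: "i < n"
    obtain r m where r: "r \<in> S" "\<forall>j<n. Nent E D i j = m * Nent E D r j" using row_rep[OF mg tr i] by blast
    have "?det * Nent E D i d = m * (?det * Nent E D r d)" using r(2) abc by simp
    also have "\<dots> = m * (?a1 * Nent E D r a + ?a2 * Nent E D r b + ?a3 * Nent E D r c)" using key[OF r(1)] by simp
    also have "\<dots> = ?a1 * Nent E D i a + ?a2 * Nent E D i b + ?a3 * Nent E D i c" using r(2) abc by (simp add: algebra_simps)
    finally show "Nent E D i d = (?a1 / ?det) * Nent E D i a + (?a2 / ?det) * Nent E D i b + (?a3 / ?det) * Nent E D i c"
      using dz by (simp add: field_simps)
  qed
  have "\<forall>s\<in>S. \<exists>w1 w2 w3. \<forall>i<n. Nent E D i s = w1 * Nent E D i a + w2 * Nent E D i b + w3 * Nent E D i c"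
  proof
    fix s assume "s \<in> S"
    hence "s = a \<or> s = b \<or> s = c \<or> s = d" using S by blast
    thus "\<exists>w1 w2 w3. \<forall>i<n. Nent E D i s = w1 * Nent E D i a + w2 * Nent E D i b + w3 * Nent E D i c"
    proof (elim disjE)
      assume "s = a" thus ?thesis by (intro exI[of _ 1] exI[of _ 0]) simp
    next
      assume "s = b" thus ?thesis by (intro exI[of _ 0] exI[of _ 1] exI[of _ 0]) simp
    next
      assume "s = c" thus ?thesis by (intro exI[of _ 0] exI[of _ 0] exI[of _ 1]) simp
    next
      assume "s = d" thus ?thesis using spd by blast
    qed
  qed
  from rank_le3_gen[OF mg tr this] rank_ge3_tri[OF mg abc(1-3) E(1-3)] show ?thesis by linarith
qed


lemma tri_from_span:
  assumes mg: "mixed_graph n E D" and s: "s1 < n" "s2 < n" "s3 < n"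
    and span: "\<forall>v<n. \<exists>x1 x2 x3. \<forall>i<n. Nent E D i v = x1 * Nent E D i s1 + x2 * Nent E D i s2 + x3 * Nent E D i s3"
    and ind: "\<forall>y1 y2 y3. (\<forall>i<n. y1 * Nent E D i s1 + y2 * Nent E D i s2 + y3 * Nent E D i s3 = 0)
        \<longrightarrow> y1 = 0 \<and> y2 = 0 \<and> y3 = 0"
  shows "E s1 s2"
proof (rule ccontr)
  assume "\<not> E s1 s2"
  hence z: "Nent E D s1 s2 = 0" using Nent_nz_iff[OF mg] by blast
  let ?p = "Nent E D s1 s3" and ?q = "Nent E D s2 s3"
  have X: "\<exists>x3. Nent E D s1 i = x3 * ?p \<and> Nent E D s2 i = x3 * ?q" if i: "i < n" for i
  proof -
    obtain x1 x2 x3 where x: "\<forall>j<n. Nent E D j i = x1 * Nent E D j s1 + x2 * Nent E D j s2 + x3 * Nent E D j s3"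
      using span i by blast
    have "Nent E D s1 i = x1 * Nent E D s1 s1 + x2 * Nent E D s1 s2 + x3 * Nent E D s1 s3" using x s by blast
    moreover have "Nent E D s2 i = x1 * Nent E D s2 s1 + x2 * Nent E D s2 s2 + x3 * Nent E D s2 s3" using x s by blast
    moreover have "Nent E D s2 s1 = 0" using z Nent_herm[OF mg, of s1 s2] by simp
    ultimately show ?thesis using z Nent_diag[OF mg] by auto
  qed
  have cj: "Nent E D i s1 = cnj (Nent E D s1 i)" "Nent E D i s2 = cnj (Nent E D s2 i)" for i
    using Nent_herm[OF mg] by blast+
  show False
  proof (cases "?p = 0 \<and> ?q = 0")
    case True
    have "\<forall>i<n. 1 * Nent E D i s1 + 0 * Nent E D i s2 + 0 * Nent E D i s3 = 0"
    proof (intro allI impI)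
      fix i assume "i < n"
      then obtain x3 where "Nent E D s1 i = x3 * ?p" using X by blast
      thus "1 * Nent E D i s1 + 0 * Nent E D i s2 + 0 * Nent E D i s3 = 0" using True cj by simp
    qed
    from ind[THEN spec, THEN spec, THEN spec, THEN mp, OF this] show False by simp
  next
    case False
    have "\<forall>i<n. cnj ?q * Nent E D i s1 + (- cnj ?p) * Nent E D i s2 + 0 * Nent E D i s3 = 0"
    proof (intro allI impI)
      fix i assume "i < n"
      then obtain x3 where "Nent E D s1 i = x3 * ?p" "Nent E D s2 i = x3 * ?q" using X by blast
      thus "cnj ?q * Nent E D i s1 + (- cnj ?p) * Nent E D i s2 + 0 * Nent E D i s3 = 0" using cj by simp
    qed
    hence "cnj ?q = 0 \<and> - cnj ?p = 0" by (rule ind[THEN spec, THEN spec, THEN spec, THEN mp, THEN conjE]) simp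
    thus False using False by simp
  qed
qed

lemma K_rel:
  assumes mg: "mixed_graph n E D" and s: "s1 < n" "s2 < n" "s3 < n"
    and span: "\<forall>v<n. \<exists>x1 x2 x3. \<forall>i<n. Nent E D i v = x1 * Nent E D i s1 + x2 * Nent E D i s2 + x3 * Nent E D i s3"
    and uv: "u < n" "v < n"
  shows "detC (Nent E D s1 s2) (Nent E D s1 s3) (Nent E D s2 s3) * Nent E D u v =
    QC (Nent E D s1 s2) (Nent E D s1 s3) (Nent E D s2 s3) (Nent E D s1 u) (Nent E D s2 u) (Nent E D s3 u)
      (Nent E D s1 v) (Nent E D s2 v) (Nent E D s3 v)"
proof -
  let ?x = "Nent E D s1 s2" and ?y = "Nent E D s1 s3" and ?z = "Nent E D s2 s3"
  obtain x1 x2 x3 where x: "\<forall>i<n. Nent E D i v = x1 * Nent E D i s1 + x2 * Nent E D i s2 + x3 * Nent E D i s3"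
    using span uv by blast
  have dg: "Nent E D s1 s1 = 0" "Nent E D s2 s2 = 0" "Nent E D s3 s3 = 0" using Nent_diag[OF mg] by blast+
  have hm: "Nent E D s2 s1 = cnj ?x" "Nent E D s3 s1 = cnj ?y" "Nent E D s3 s2 = cnj ?z"
    using Nent_herm[OF mg] by blast+
  have e1: "Nent E D s1 v = ?x * x2 + ?y * x3" using x s dg by (simp add: algebra_simps)
  have e2: "Nent E D s2 v = cnj ?x * x1 + ?z * x3" using x s dg hm by (simp add: algebra_simps)
  have e3: "Nent E D s3 v = cnj ?y * x1 + cnj ?z * x2" using x s dg hm by (simp add: algebra_simps)
  note a = adj_solve[OF e1 e2 e3]
  have hu: "Nent E D u s1 = cnj (Nent E D s1 u)" "Nent E D u s2 = cnj (Nent E D s2 u)" "Nent E D u s3 = cnj (Nent E D s3 u)"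
    using Nent_herm[OF mg] by blast+
  have "detC ?x ?y ?z * Nent E D u v = (detC ?x ?y ?z * x1) * Nent E D u s1 + (detC ?x ?y ?z * x2) * Nent E D u s2
      + (detC ?x ?y ?z * x3) * Nent E D u s3"
    using x uv by (simp add: algebra_simps)
  also have "\<dots> = QC ?x ?y ?z (Nent E D s1 u) (Nent E D s2 u) (Nent E D s3 u) (Nent E D s1 v) (Nent E D s2 v) (Nent E D s3 v)"
    unfolding a QC_def hu by (simp add: algebra_simps)
  finally show ?thesis .
qed


lemma has_nbr:
  assumes mg: "mixed_graph n E D" and conn: "connected_graph n E" and tv: "t < n" "v < n" "t \<noteq> v"
  shows "\<exists>u<n. Nent E D u t \<noteq> 0"
proof -
  have "E\<^sup>*\<^sup>* t v" using conn tv unfolding connected_graph_def by blast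
  then obtain y where "E t y" using tv(3) by (cases rule: converse_rtranclpE) auto
  hence "E y t" "y < n" using mg_E_sym[OF mg] mg_E_range[OF mg] by blast+
  thus ?thesis using Nent_nz_iff[OF mg] by blast
qed

lemma rank3_imp:
  assumes mg: "mixed_graph n E D" and conn: "connected_graph n E" and tr: "twin_reduction n E D S"
    and r: "vec_space.rank n (Nmat n E D) = 3"
  shows "is_mixed_triangle E S \<or> is_K4_two_pos_one_semineg E D S"
proof -
  obtain j1 j2 j3 where jall: "j1 < n \<and> j2 < n \<and> j3 < n \<and>
    (\<forall>y1 y2 y3. (\<forall>i<n. y1 * Nmat n E D $$ (i, j1) + y2 * Nmat n E D $$ (i, j2) + y3 * Nmat n E D $$ (i, j3) = 0)
       \<longrightarrow> y1 = 0 \<and> y2 = 0 \<and> y3 = 0) \<and>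
    (\<forall>v<n. \<exists>x1 x2 x3. \<forall>i<n. Nmat n E D $$ (i, v) = x1 * Nmat n E D $$ (i, j1) + x2 * Nmat n E D $$ (i, j2) + x3 * Nmat n E D $$ (i, j3))"
    using vec_space.rank3_struct[OF Nmat_carrier r] by (elim exE) (erule that)
  have j: "j1 < n" "j2 < n" "j3 < n" using jall by blast+
  have ind0: "\<forall>y1 y2 y3. (\<forall>i<n. y1 * Nmat n E D $$ (i, j1) + y2 * Nmat n E D $$ (i, j2) + y3 * Nmat n E D $$ (i, j3) = 0)
       \<longrightarrow> y1 = 0 \<and> y2 = 0 \<and> y3 = 0" using jall[THEN conjunct2, THEN conjunct2, THEN conjunct2, THEN conjunct1] .
  have span0: "\<forall>v<n. \<exists>x1 x2 x3. \<forall>i<n. Nmat n E D $$ (i, v) = x1 * Nmat n E D $$ (i, j1) + x2 * Nmat n E D $$ (i, j2) + x3 * Nmat n E D $$ (i, j3)"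
    using jall[THEN conjunct2, THEN conjunct2, THEN conjunct2, THEN conjunct2] .
  have ind1: "\<forall>y1 y2 y3. (\<forall>i<n. y1 * Nent E D i j1 + y2 * Nent E D i j2 + y3 * Nent E D i j3 = 0)
       \<longrightarrow> y1 = 0 \<and> y2 = 0 \<and> y3 = 0"
  proof (intro allI impI)
    fix y1 y2 y3 assume h: "\<forall>i<n. y1 * Nent E D i j1 + y2 * Nent E D i j2 + y3 * Nent E D i j3 = 0"
    have "\<forall>i<n. y1 * Nmat n E D $$ (i, j1) + y2 * Nmat n E D $$ (i, j2) + y3 * Nmat n E D $$ (i, j3) = 0"
      using h j by (simp add: Nmat_index)
    thus "y1 = 0 \<and> y2 = 0 \<and> y3 = 0" by (rule ind0[THEN spec, THEN spec, THEN spec, THEN mp])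
  qed
  have span1: "\<forall>v<n. \<exists>x1 x2 x3. \<forall>i<n. Nent E D i v = x1 * Nent E D i j1 + x2 * Nent E D i j2 + x3 * Nent E D i j3"
  proof (intro allI impI)
    fix v assume v: "v < n"
    then obtain x1 x2 x3 where x: "\<forall>i<n. Nmat n E D $$ (i, v) = x1 * Nmat n E D $$ (i, j1) + x2 * Nmat n E D $$ (i, j2) + x3 * Nmat n E D $$ (i, j3)"
      using span0 by blast
    have "\<forall>i<n. Nent E D i v = x1 * Nent E D i j1 + x2 * Nent E D i j2 + x3 * Nent E D i j3"
      using x j v by (simp add: Nmat_index)
    thus "\<exists>x1 x2 x3. \<forall>i<n. Nent E D i v = x1 * Nent E D i j1 + x2 * Nent E D i j2 + x3 * Nent E D i j3" by blast
  qed
  have Sn: "\<And>s. s \<in> S \<Longrightarrow> s < n" using tr unfolding twin_reduction_def by auto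
  have crep: "\<exists>s\<in>S. \<exists>m. m \<noteq> 0 \<and> (\<forall>i<n. Nent E D i jj = m * Nent E D i s)" if jj: "jj < n" for jj
  proof -
    obtain s m where s: "s \<in> S" "m \<noteq> 0" "\<forall>j<n. Nent E D jj j = m * Nent E D s j" using row_rep[OF mg tr jj] by blast
    have "\<forall>i<n. Nent E D i jj = cnj m * Nent E D i s"
    proof (intro allI impI)
      fix i assume i: "i < n"
      have "Nent E D i jj = cnj (Nent E D jj i)" using Nent_herm[OF mg, of jj i] by simp
      also have "\<dots> = cnj (m * Nent E D s i)" using s(3) i by simp
      also have "\<dots> = cnj m * Nent E D i s" using Nent_herm[OF mg, of s i] by simp
      finally show "Nent E D i jj = cnj m * Nent E D i s" .
    qed
    moreover have "cnj m \<noteq> 0" using s(2) by simp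
    ultimately show ?thesis using s(1) by blast
  qed
  obtain s1 m1 where s1: "s1 \<in> S" "m1 \<noteq> 0" "\<forall>i<n. Nent E D i j1 = m1 * Nent E D i s1" using crep[OF j(1)] by blast
  obtain s2 m2 where s2: "s2 \<in> S" "m2 \<noteq> 0" "\<forall>i<n. Nent E D i j2 = m2 * Nent E D i s2" using crep[OF j(2)] by blast
  obtain s3 m3 where s3: "s3 \<in> S" "m3 \<noteq> 0" "\<forall>i<n. Nent E D i j3 = m3 * Nent E D i s3" using crep[OF j(3)] by blast
  have sn: "s1 < n" "s2 < n" "s3 < n" using Sn s1 s2 s3 by blast+
  have span: "\<forall>v<n. \<exists>x1 x2 x3. \<forall>i<n. Nent E D i v = x1 * Nent E D i s1 + x2 * Nent E D i s2 + x3 * Nent E D i s3"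
  proof (intro allI impI)
    fix v assume v: "v < n"
    then obtain x1 x2 x3 where x: "\<forall>i<n. Nent E D i v = x1 * Nent E D i j1 + x2 * Nent E D i j2 + x3 * Nent E D i j3"
      using span1 by blast
    have "\<forall>i<n. Nent E D i v = (x1 * m1) * Nent E D i s1 + (x2 * m2) * Nent E D i s2 + (x3 * m3) * Nent E D i s3"
      using x s1 s2 s3 by (simp add: algebra_simps)
    thus "\<exists>x1 x2 x3. \<forall>i<n. Nent E D i v = x1 * Nent E D i s1 + x2 * Nent E D i s2 + x3 * Nent E D i s3" by blast
  qed
  have ind: "\<forall>y1 y2 y3. (\<forall>i<n. y1 * Nent E D i s1 + y2 * Nent E D i s2 + y3 * Nent E D i s3 = 0)
       \<longrightarrow> y1 = 0 \<and> y2 = 0 \<and> y3 = 0"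
  proof (intro allI impI)
    fix y1 y2 y3 assume h: "\<forall>i<n. y1 * Nent E D i s1 + y2 * Nent E D i s2 + y3 * Nent E D i s3 = 0"
    have "\<forall>i<n. (y1 / m1) * Nent E D i j1 + (y2 / m2) * Nent E D i j2 + (y3 / m3) * Nent E D i j3 = 0"
      using h s1 s2 s3 by simp
    hence "y1 / m1 = 0 \<and> y2 / m2 = 0 \<and> y3 / m3 = 0"
      by (rule ind1[THEN spec, THEN spec, THEN spec, THEN mp])
    thus "y1 = 0 \<and> y2 = 0 \<and> y3 = 0" using s1 s2 s3 by simp
  qed
  have E12: "E s1 s2" by (rule tri_from_span[OF mg sn span ind])
  have E13: "E s1 s3"
  proof (rule tri_from_span[OF mg sn(1) sn(3) sn(2)])
    show "\<forall>v<n. \<exists>x1 x2 x3. \<forall>i<n. Nent E D i v = x1 * Nent E D i s1 + x2 * Nent E D i s3 + x3 * Nent E D i s2"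
    proof (intro allI impI)
      fix v assume "v < n"
      then obtain x1 x2 x3 where "\<forall>i<n. Nent E D i v = x1 * Nent E D i s1 + x2 * Nent E D i s2 + x3 * Nent E D i s3"
        using span by blast
      hence "\<forall>i<n. Nent E D i v = x1 * Nent E D i s1 + x3 * Nent E D i s3 + x2 * Nent E D i s2"
        by (simp add: algebra_simps)
      thus "\<exists>x1 x2 x3. \<forall>i<n. Nent E D i v = x1 * Nent E D i s1 + x2 * Nent E D i s3 + x3 * Nent E D i s2" by blast
    qed
    show "\<forall>y1 y2 y3. (\<forall>i<n. y1 * Nent E D i s1 + y2 * Nent E D i s3 + y3 * Nent E D i s2 = 0) \<longrightarrow> y1 = 0 \<and> y2 = 0 \<and> y3 = 0"
    proof (intro allI impI)
      fix y1 y2 y3 assume "\<forall>i<n. y1 * Nent E D i s1 + y2 * Nent E D i s3 + y3 * Nent E D i s2 = 0"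
      hence "\<forall>i<n. y1 * Nent E D i s1 + y3 * Nent E D i s2 + y2 * Nent E D i s3 = 0" by (simp add: algebra_simps)
      hence "y1 = 0 \<and> y3 = 0 \<and> y2 = 0" by (rule ind[THEN spec, THEN spec, THEN spec, THEN mp])
      thus "y1 = 0 \<and> y2 = 0 \<and> y3 = 0" by blast
    qed
  qed
  have E23: "E s2 s3"
  proof (rule tri_from_span[OF mg sn(2) sn(3) sn(1)])
    show "\<forall>v<n. \<exists>x1 x2 x3. \<forall>i<n. Nent E D i v = x1 * Nent E D i s2 + x2 * Nent E D i s3 + x3 * Nent E D i s1"
    proof (intro allI impI)
      fix v assume "v < n"
      then obtain x1 x2 x3 where "\<forall>i<n. Nent E D i v = x1 * Nent E D i s1 + x2 * Nent E D i s2 + x3 * Nent E D i s3"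
        using span by blast
      hence "\<forall>i<n. Nent E D i v = x2 * Nent E D i s2 + x3 * Nent E D i s3 + x1 * Nent E D i s1"
        by (simp add: algebra_simps)
      thus "\<exists>x1 x2 x3. \<forall>i<n. Nent E D i v = x1 * Nent E D i s2 + x2 * Nent E D i s3 + x3 * Nent E D i s1" by blast
    qed
    show "\<forall>y1 y2 y3. (\<forall>i<n. y1 * Nent E D i s2 + y2 * Nent E D i s3 + y3 * Nent E D i s1 = 0) \<longrightarrow> y1 = 0 \<and> y2 = 0 \<and> y3 = 0"
    proof (intro allI impI)
      fix y1 y2 y3 assume "\<forall>i<n. y1 * Nent E D i s2 + y2 * Nent E D i s3 + y3 * Nent E D i s1 = 0"
      hence "\<forall>i<n. y3 * Nent E D i s1 + y1 * Nent E D i s2 + y2 * Nent E D i s3 = 0" by (simp add: algebra_simps)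
      hence "y3 = 0 \<and> y1 = 0 \<and> y2 = 0" by (rule ind[THEN spec, THEN spec, THEN spec, THEN mp])
      thus "y1 = 0 \<and> y2 = 0 \<and> y3 = 0" by blast
    qed
  qed
  let ?x = "Nent E D s1 s2" and ?y = "Nent E D s1 s3" and ?z = "Nent E D s2 s3"
  let ?det = "detC ?x ?y ?z"
  have nz: "?x \<in> NZ" "?y \<in> NZ" "?z \<in> NZ" using Nent_NZ[OF mg] E12 E13 E23 by blast+
  have dz: "?det \<noteq> 0" using fc1C[OF nz] .
  have K: "?det * Nent E D u v = QC ?x ?y ?z (Nent E D s1 u) (Nent E D s2 u) (Nent E D s3 u)
      (Nent E D s1 v) (Nent E D s2 v) (Nent E D s3 v)" if "u < n" "v < n" for u v
    using K_rel[OF mg sn span that] .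
  have dst: "s1 \<noteq> s2" "s1 \<noteq> s3" "s2 \<noteq> s3" using E12 E13 E23 mg_E_irrefl[OF mg] by blast+
  have notw: False if tu: "t \<in> S" "u \<in> S" "t \<noteq> u" "m \<in> T6" and h: "\<forall>i<n. Nent E D i t = m * Nent E D i u" for t u m
  proof -
    have tun: "t < n" "u < n" using Sn tu by blast+
    have "\<forall>j<n. Nent E D t j = cnj m * Nent E D u j"
    proof (intro allI impI)
      fix j assume j: "j < n"
      have "Nent E D t j = cnj (Nent E D j t)" using Nent_herm[OF mg, of j t] by simp
      also have "\<dots> = cnj (m * Nent E D j u)" using h j by simp
      also have "\<dots> = cnj m * Nent E D u j" using Nent_herm[OF mg, of u j] by simp
      finally show "Nent E D t j = cnj m * Nent E D u j" .
    qed
    hence "twins n E D t u" using prop_twins[OF mg tun T6_cnj[OF tu(4)]] by blast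
    thus False using tr tu(1-3) unfolding twin_reduction_def by blast
  qed
  have propK: False if tu: "t \<in> S" "u \<in> S" "t \<noteq> u"
    and p: "propC (Nent E D s1 t) (Nent E D s2 t) (Nent E D s3 t) (Nent E D s1 u) (Nent E D s2 u) (Nent E D s3 u)" for t u
  proof -
    obtain m where m: "m \<in> T6" "Nent E D s1 t = m * Nent E D s1 u" "Nent E D s2 t = m * Nent E D s2 u"
      "Nent E D s3 t = m * Nent E D s3 u" using p unfolding propC_def by blast
    have tun: "t < n" "u < n" using Sn tu by blast+
    have "\<forall>i<n. Nent E D i t = m * Nent E D i u"
    proof (intro allI impI)
      fix i assume i: "i < n"
      have "?det * Nent E D i t = m * (?det * Nent E D i u)"
        unfolding K[OF i tun(1)] K[OF i tun(2)] m(2-4) QC_lin ..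
      hence "?det * (Nent E D i t - m * Nent E D i u) = 0" by (simp add: algebra_simps)
      thus "Nent E D i t = m * Nent E D i u" using dz by simp
    qed
    thus False using notw[OF tu m(1)] by blast
  qed
  have hm: "Nent E D s2 s1 = cnj ?x" "Nent E D s3 s1 = cnj ?y" "Nent E D s3 s2 = cnj ?z"
    using Nent_herm[OF mg] by blast+
  have dg: "Nent E D s1 s1 = 0" "Nent E D s2 s2 = 0" "Nent E D s3 s3 = 0" using Nent_diag[OF mg] by blast+
  have survt: "\<not> (Nent E D s1 t = 0 \<and> Nent E D s2 t = 0 \<and> Nent E D s3 t = 0) \<and>
     QC ?x ?y ?z (Nent E D s1 t) (Nent E D s2 t) (Nent E D s3 t) (Nent E D s1 t) (Nent E D s2 t) (Nent E D s3 t) = 0 \<and>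
     \<not> propC (Nent E D s1 t) (Nent E D s2 t) (Nent E D s3 t) 0 (cnj ?x) (cnj ?y) \<and>
     \<not> propC (Nent E D s1 t) (Nent E D s2 t) (Nent E D s3 t) ?x 0 (cnj ?z) \<and>
     \<not> propC (Nent E D s1 t) (Nent E D s2 t) (Nent E D s3 t) ?y ?z 0"
    if t: "t \<in> S" "t \<notin> {s1, s2, s3}" for t
  proof (intro conjI)
    have tn: "t < n" using Sn t by blast
    show "\<not> (Nent E D s1 t = 0 \<and> Nent E D s2 t = 0 \<and> Nent E D s3 t = 0)"
    proof
      assume z: "Nent E D s1 t = 0 \<and> Nent E D s2 t = 0 \<and> Nent E D s3 t = 0"
      have "t \<noteq> s1" using t by blast
      then obtain u where u: "u < n" "Nent E D u t \<noteq> 0" using has_nbr[OF mg conn tn sn(1)] by blast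
      have "?det * Nent E D u t = 0" using K[OF u(1) tn] z QC_zero by simp
      thus False using dz u(2) by simp
    qed
    show "QC ?x ?y ?z (Nent E D s1 t) (Nent E D s2 t) (Nent E D s3 t) (Nent E D s1 t) (Nent E D s2 t) (Nent E D s3 t) = 0"
      using K[OF tn tn] Nent_diag[OF mg, of t] by simp
    show "\<not> propC (Nent E D s1 t) (Nent E D s2 t) (Nent E D s3 t) 0 (cnj ?x) (cnj ?y)"
      using propK[OF t(1) s1(1)] t(2) hm dg by auto
    show "\<not> propC (Nent E D s1 t) (Nent E D s2 t) (Nent E D s3 t) ?x 0 (cnj ?z)"
      using propK[OF t(1) s2(1)] t(2) hm dg by auto
    show "\<not> propC (Nent E D s1 t) (Nent E D s2 t) (Nent E D s3 t) ?y ?z 0"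
      using propK[OF t(1) s3(1)] t(2) hm dg by auto
  qed
  have out: "Nent E D s1 t \<noteq> 0 \<and> Nent E D s2 t \<noteq> 0 \<and> Nent E D s3 t \<noteq> 0 \<and>
     (opt1C ?x ?y ?z (Nent E D s1 t) (Nent E D s2 t) (Nent E D s3 t) \<or>
      opt2C ?x ?y ?z (Nent E D s1 t) (Nent E D s2 t) (Nent E D s3 t) \<or>
      opt3C ?x ?y ?z (Nent E D s1 t) (Nent E D s2 t) (Nent E D s3 t))"
    if t: "t \<in> S" "t \<notin> {s1, s2, s3}" for t
    using fc3C[OF nz Nent_A4 Nent_A4 Nent_A4] survt[OF t] by blast
  have uniq: "t = t'" if t: "t \<in> S" "t \<notin> {s1, s2, s3}" and t': "t' \<in> S" "t' \<notin> {s1, s2, s3}" for t t'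
  proof (rule ccontr)
    assume ne: "t \<noteq> t'"
    have tn: "t < n" "t' < n" using Sn t t' by blast+
    have q: "QC ?x ?y ?z (Nent E D s1 t) (Nent E D s2 t) (Nent E D s3 t) (Nent E D s1 t') (Nent E D s2 t') (Nent E D s3 t')
        = ?det * Nent E D t t'" using K[OF tn] by simp
    have "propC (Nent E D s1 t) (Nent E D s2 t) (Nent E D s3 t) (Nent E D s1 t') (Nent E D s2 t') (Nent E D s3 t')"
    proof -
      note st = survt[OF t] and st' = survt[OF t']
      note r = fc4C[of ?x ?y ?z "Nent E D s1 t" "Nent E D s2 t" "Nent E D s3 t" "Nent E D s1 t'" "Nent E D s2 t'" "Nent E D s3 t'"
         "Nent E D t t'", OF nz Nent_A4 Nent_A4 Nent_A4 Nent_A4 Nent_A4 Nent_A4]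
      show ?thesis
        apply (rule r)
        using st st' q Nent_A4 by blast+
    qed
    thus False using propK[OF t(1) t'(1) ne] by blast
  qed
  have T: "{s1, s2, s3} \<subseteq> S" using s1 s2 s3 by blast
  show ?thesis
  proof (cases "S \<subseteq> {s1, s2, s3}")
    case True
    hence S: "S = {s1, s2, s3}" using T by blast
    have "is_mixed_triangle E S"
      unfolding is_mixed_triangle_def S using dst E12 E13 E23 mg_E_sym[OF mg] by auto
    thus ?thesis by blast
  next
    case False
    then obtain t where t: "t \<in> S" "t \<notin> {s1, s2, s3}" by blast
    have S: "S = {s1, s2, s3, t}" using T t uniq[OF t] by blast
    let ?c1 = "Nent E D s1 t" and ?c2 = "Nent E D s2 t" and ?c3 = "Nent E D s3 t"
    note o = out[OF t]
    have Et: "E s1 t" "E s2 t" "E s3 t" using o Nent_nz_iff[OF mg] by blast+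
    have hmt: "Nent E D t s1 = cnj ?c1" "Nent E D t s2 = cnj ?c2" "Nent E D t s3 = cnj ?c3"
      using Nent_herm[OF mg] by blast+
    have card: "card S = 4" unfolding S using dst t(2) by simp
    have pw: "\<forall>a\<in>S. \<forall>b\<in>S. a \<noteq> b \<longrightarrow> E a b"
      unfolding S using E12 E13 E23 Et mg_E_sym[OF mg] by auto
    have "\<exists>a b c d. S = {a, b, c, d} \<and>
        positive_w (cycle4_weight E D a b c d) \<and>
        positive_w (cycle4_weight E D a b d c) \<and>
        semi_negative_w (cycle4_weight E D a c b d)"
    proof -
      have "opt1C ?x ?y ?z ?c1 ?c2 ?c3 \<or> opt2C ?x ?y ?z ?c1 ?c2 ?c3 \<or> opt3C ?x ?y ?z ?c1 ?c2 ?c3" using o by blast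
      moreover
      { assume h: "opt1C ?x ?y ?z ?c1 ?c2 ?c3"
        have "positive_w (cycle4_weight E D s1 s2 s3 t) \<and> positive_w (cycle4_weight E D s1 s2 t s3) \<and>
            semi_negative_w (cycle4_weight E D s1 s3 s2 t)"
          using h unfolding opt1C_def w4C_def semiC_def positive_w_def semi_negative_w_def cycle4_weight_def
          by (simp add: hm hmt)
        hence ?thesis using S by blast }
      moreover
      { assume h: "opt2C ?x ?y ?z ?c1 ?c2 ?c3"
        have "positive_w (cycle4_weight E D s1 s3 s2 t) \<and> positive_w (cycle4_weight E D s1 s3 t s2) \<and>
            semi_negative_w (cycle4_weight E D s1 s2 s3 t)"
          using h unfolding opt2C_def w4C_def semiC_def positive_w_def semi_negative_w_def cycle4_weight_def
          by (simp add: hm hmt)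
        moreover have "S = {s1, s3, s2, t}" using S by blast
        ultimately have ?thesis by blast }
      moreover
      { assume h: "opt3C ?x ?y ?z ?c1 ?c2 ?c3"
        have "positive_w (cycle4_weight E D s1 t s2 s3) \<and> positive_w (cycle4_weight E D s1 t s3 s2) \<and>
            semi_negative_w (cycle4_weight E D s1 s2 t s3)"
          using h unfolding opt3C_def w4C_def semiC_def positive_w_def semi_negative_w_def cycle4_weight_def
          by (simp add: hm hmt)
        moreover have "S = {s1, t, s2, s3}" using S by blast
        ultimately have ?thesis by blast }
      ultimately show ?thesis by blast
    qed
    hence "is_K4_two_pos_one_semineg E D S" unfolding is_K4_two_pos_one_semineg_def using card pw by blast
    thus ?thesis by blast
  qed
qed


theorem theorem5p14:
  fixes n :: nat and E D :: "nat \<Rightarrow> nat \<Rightarrow> bool" and S :: "nat set"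
  assumes "mixed_graph n E D"
    and "connected_graph n E"
    and "twin_reduction n E D S"
  shows "vec_space.rank n (Nmat n E D) = 3 \<longleftrightarrow>
           (is_mixed_triangle E S \<or> is_K4_two_pos_one_semineg E D S)"
proof
  assume "vec_space.rank n (Nmat n E D) = 3"
  thus "is_mixed_triangle E S \<or> is_K4_two_pos_one_semineg E D S" using rank3_imp assms by blast
next
  note mg = assms(1) and tr = assms(3)
  assume "is_mixed_triangle E S \<or> is_K4_two_pos_one_semineg E D S"
  thus "vec_space.rank n (Nmat n E D) = 3"
  proof
    assume h: "is_mixed_triangle E S"
    then obtain a b c where S: "S = {a, b, c}" and d: "a \<noteq> b" "b \<noteq> c" "a \<noteq> c"
      unfolding is_mixed_triangle_def by (auto simp: card_3_iff)
    have "E a b" "E a c" "E b c" using h d unfolding is_mixed_triangle_def S by auto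
    thus ?thesis using rank_tri_case[OF mg tr S] by blast
  next
    assume h: "is_K4_two_pos_one_semineg E D S"
    then obtain a b c d where S: "S = {a, b, c, d}"
      and p1: "positive_w (cycle4_weight E D a b c d)" and p2: "positive_w (cycle4_weight E D a b d c)"
      and sn: "semi_negative_w (cycle4_weight E D a c b d)"
      unfolding is_K4_two_pos_one_semineg_def by blast
    have card: "card {a, b, c, d} = 4" using h S unfolding is_K4_two_pos_one_semineg_def by simp
    have dst: "a \<noteq> b" "a \<noteq> c" "a \<noteq> d" "b \<noteq> c" "b \<noteq> d" "c \<noteq> d"
      using card by (auto simp: card_insert_if split: if_splits)
    have pw: "\<forall>x\<in>S. \<forall>y\<in>S. x \<noteq> y \<longrightarrow> E x y" using h unfolding is_K4_two_pos_one_semineg_def by blast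
    have E: "E a b" "E a c" "E b c" "E a d" "E b d" "E c d" using pw dst unfolding S by auto
    have hm: "Nent E D b a = cnj (Nent E D a b)" "Nent E D c a = cnj (Nent E D a c)" "Nent E D c b = cnj (Nent E D b c)"
      "Nent E D d a = cnj (Nent E D a d)" "Nent E D d b = cnj (Nent E D b d)" "Nent E D d c = cnj (Nent E D c d)"
      using Nent_herm[OF mg] by blast+
    have "opt1C (Nent E D a b) (Nent E D a c) (Nent E D b c) (Nent E D a d) (Nent E D b d) (Nent E D c d)"
      using p1 p2 sn unfolding opt1C_def w4C_def semiC_def positive_w_def semi_negative_w_def cycle4_weight_def
      by (simp add: hm)
    thus ?thesis using rank_K4_case[OF mg tr S E] by blast
  qed
qed

end
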